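(* For every $S\in\{\tfrac12,1,\tfrac32,\dots\}$, every $L\in\mathbb N$ and every $\beta>0$, $$\frac{\langle D_L|e^{-\beta H^{(L)}_{\mathrm{AF}}}|D_L\rangle}{\operatorname{tr}e^{-\beta H^{(L)}_{\mathrm{AF}}}}\ \ge\ \frac1{(2S+1)^L}.$$ In particular the seed vector $|D_L\rangle$ has nonzero projection onto the ground-state eigenspace of $H^{(L)}_{\mathrm{AF}}$.
   Context: $\Lambda_L=\{-L+1,\dots,L\}$, $\mathcal H_L=\bigotimes_{v\in\Lambda_L}\mathbb C^{2S+1}$, with $|m\rangle$ ($m=-S,\dots,S$) the eigenbasis of the spin-$S$ operator $S^z$ and $|m,m'\rangle_{u,v}=|m\rangle_u\otimes|m'\rangle_v$. $P^{(0)}_{u,v}=\frac1{2S+1}\sum_{m,m'=-S}^S(-1)^{m-m'}(|m,-m\rangle\langle m',-m'|)_{u,v}$ (the projection onto the singlet of $\mathbf S_u+\mathbf S_v$), $H^{(L)}_{\mathrm{AF}}=-(2S+1)\sum_{u=-L+1}^{L-1}P^{(0)}_{u,u+1}$, and $|D_L\rangle=\bigotimes_{j=1}^L\sum_{m=-S}^S(-1)^m|m,-m\rangle_{-L+2j-1,-L+2j}$. *)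

theory Defs
  imports "Jordan_Normal_Form.Matrix" "Jordan_Normal_Form.Char_Poly"
begin

(* The spin S is encoded by the natural number n = 2S (n >= 1), so S ranges over {1/2,1,3/2,...}.
   The local basis state |m>, m = -S..S, is encoded by the digit j = m + S in {0..n}; so -m <-> n - j.
   The 2L sites v = -L+1,...,L of Lambda_L are encoded by positions p = v + L - 1 in {0..<2L}.
   A product basis state of H_L is encoded as an index x < (n+1)^(2L) whose base-(n+1) digit
   at position p is the local state of site p. *)

definition digit :: "nat \<Rightarrow> nat \<Rightarrow> nat \<Rightarrow> nat" where
  "digit n p x = (x div (n + 1) ^ p) mod (n + 1)"

definition hdim :: "nat \<Rightarrow> nat \<Rightarrow> nat" where
  "hdim n L = (n + 1) ^ (2 * L)"

(* P^(0)_{u,u+1} for the sites at positions p, p+1: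
   <x|P|y> = 1/(2S+1) (-1)^(m-m') [x_p = -x_{p+1}] [y_p = -y_{p+1}] [x_q = y_q for all other q] *)
definition singlet_proj :: "nat \<Rightarrow> nat \<Rightarrow> nat \<Rightarrow> real mat" where
  "singlet_proj n L p = mat (hdim n L) (hdim n L) (\<lambda>(x, y).
     if digit n (p + 1) x = n - digit n p x \<and> digit n (p + 1) y = n - digit n p y
        \<and> (\<forall>q < 2 * L. q \<noteq> p \<and> q \<noteq> p + 1 \<longrightarrow> digit n q x = digit n q y)
     then (-1) ^ (digit n p x + digit n p y) / real (n + 1) else 0)"

definition H_AF :: "nat \<Rightarrow> nat \<Rightarrow> real mat" where
  "H_AF n L = mat (hdim n L) (hdim n L) (\<lambda>(x, y).
     - real (n + 1) * (\<Sum>p | p + 1 < 2 * L. singlet_proj n L p $$ (x, y)))"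

(* |D_L> = tensor_{j=1}^L sum_m (-1)^m |m,-m>_{-L+2j-1,-L+2j}; the pair j occupies positions
   2(j-1), 2(j-1)+1.  The sign (-1)^m is taken as (-1)^(m+S) = (-1)^digit, which differs from
   (-1)^m only by the global phase (-1)^(-S L) (irrelevant for everything below). *)
definition D_vec :: "nat \<Rightarrow> nat \<Rightarrow> real vec" where
  "D_vec n L = vec (hdim n L) (\<lambda>x.
     \<Prod>j<L. (if digit n (2 * j + 1) x = n - digit n (2 * j) x
              then (-1) ^ digit n (2 * j) x else 0))"

definition mat_trace :: "real mat \<Rightarrow> real" where
  "mat_trace A = (\<Sum>i<dim_row A. A $$ (i, i))"

definition mat_exp :: "real mat \<Rightarrow> real mat" where
  "mat_exp A = mat (dim_row A) (dim_col A) (\<lambda>(i, j). \<Sum>k. (A ^\<^sub>m k) $$ (i, j) / fact k)"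

end

theory Submission
  imports Defs "HOL-Analysis.Function_Topology" "HOL-Library.FuncSet" "HOL-Analysis.Convex"
begin



definition Sol :: "'v set \<Rightarrow> 'c set \<Rightarrow> ('v \<times> 'v) set \<Rightarrow> ('v \<Rightarrow> 'c) set" where
  "Sol V C R = {c \<in> V \<rightarrow>\<^sub>E C. \<forall>(a,b)\<in>R. c a = c b}"

lemma Sol_anti: "R \<subseteq> R' \<Longrightarrow> Sol V C R' \<subseteq> Sol V C R"
  unfolding Sol_def by auto

lemma finite_Sol: "finite V \<Longrightarrow> finite C \<Longrightarrow> finite (Sol V C R)"
  unfolding Sol_def by (rule finite_subset[of _ "V \<rightarrow>\<^sub>E C"]) (auto intro: finite_PiE)

lemma Sol_const_on_comp:
  assumes c: "c \<in> Sol V C R" and w: "(v, w) \<in> (R \<union> R\<inverse>)\<^sup>*"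
  shows "c w = c v"
  using w
proof (induction rule: rtrancl_induct)
  case base then show ?case by simp
next
  case (step y z)
  from c have "\<forall>(a,b)\<in>R. c a = c b" unfolding Sol_def by auto
  with step show ?case by auto
qed

lemma Sol_recolor:
  assumes fV: "finite V" and fC: "finite C" and u: "u \<in> V" and v: "v \<in> V" and RV: "R \<subseteq> V \<times> V"
  shows "card (Sol V C R) \<le> card C * card (Sol V C (insert (u,v) R))"
proof -
  define K where "K = {w. (v, w) \<in> (R \<union> R\<inverse>)\<^sup>*}"
  have Kcl: "a \<in> K \<longleftrightarrow> b \<in> K" if "(a,b) \<in> R" for a b
  proof
    assume "a \<in> K" then show "b \<in> K" using that unfolding K_def
      by (auto intro: rtrancl_into_rtrancl)
  next
    assume "b \<in> K" then show "a \<in> K" using that unfolding K_def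
      by (auto intro: rtrancl_into_rtrancl)
  qed
  define f where "f c = (c v, (\<lambda>w. if w \<in> V then (if w \<in> K then c u else c w) else undefined))" for c :: "'a \<Rightarrow> 'b"
  have img: "f ` Sol V C R \<subseteq> C \<times> Sol V C (insert (u,v) R)"
  proof
    fix y assume "y \<in> f ` Sol V C R"
    then obtain c where c: "c \<in> Sol V C R" and y: "y = f c" by auto
    have cP: "c \<in> V \<rightarrow>\<^sub>E C" and cR: "\<forall>(a,b)\<in>R. c a = c b" using c unfolding Sol_def by auto
    have vK: "v \<in> K" unfolding K_def by simp
    have "(\<lambda>w. if w \<in> V then (if w \<in> K then c u else c w) else undefined) \<in> Sol V C (insert (u,v) R)"
      unfolding Sol_def
    proof (intro CollectI conjI)
      show "(\<lambda>w. if w \<in> V then (if w \<in> K then c u else c w) else undefined) \<in> V \<rightarrow>\<^sub>E C"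
        using cP u by auto
      show "\<forall>(a, b)\<in>insert (u, v) R. (if a \<in> V then if a \<in> K then c u else c a else undefined) =
          (if b \<in> V then if b \<in> K then c u else c b else undefined)"
      proof (intro ballI, clarify)
        fix a b assume "(a,b) \<in> insert (u,v) R"
        then consider "a = u" "b = v" | "(a,b) \<in> R" by auto
        then show "(if a \<in> V then if a \<in> K then c u else c a else undefined) =
          (if b \<in> V then if b \<in> K then c u else c b else undefined)"
        proof cases
          case 1 then show ?thesis using u v vK by auto
        next
          case 2
          then have "a \<in> V" "b \<in> V" using RV by auto
          moreover have "c a = c b" using 2 cR by auto
          ultimately show ?thesis using Kcl[OF 2] by auto
        qed
      qed
    qed
    moreover have "c v \<in> C" using cP v by auto
    ultimately show "y \<in> C \<times> Sol V C (insert (u,v) R)" using y unfolding f_def by auto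
  qed
  have inj: "inj_on f (Sol V C R)"
  proof (rule inj_onI)
    fix c1 c2 assume c1: "c1 \<in> Sol V C R" and c2: "c2 \<in> Sol V C R" and eq: "f c1 = f c2"
    have e1: "c1 v = c2 v" using eq unfolding f_def by auto
    have e2: "\<And>w. w \<in> V \<Longrightarrow> w \<notin> K \<Longrightarrow> c1 w = c2 w"
    proof -
      fix w assume "w \<in> V" "w \<notin> K"
      have "(\<lambda>w. if w \<in> V then (if w \<in> K then c1 u else c1 w) else undefined) =
            (\<lambda>w. if w \<in> V then (if w \<in> K then c2 u else c2 w) else undefined)"
        using eq unfolding f_def by simp
      then have "(if w \<in> V then (if w \<in> K then c1 u else c1 w) else undefined) =
            (if w \<in> V then (if w \<in> K then c2 u else c2 w) else undefined)" by (rule fun_cong)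
      with \<open>w \<in> V\<close> \<open>w \<notin> K\<close> show "c1 w = c2 w" by simp
    qed
    show "c1 = c2"
    proof
      fix w
      show "c1 w = c2 w"
      proof (cases "w \<in> V")
        case False then show ?thesis using c1 c2 unfolding Sol_def by (auto simp: PiE_def extensional_def)
      next
        case True
        show ?thesis
        proof (cases "w \<in> K")
          case True
          then have "c1 w = c1 v" "c2 w = c2 v" using Sol_const_on_comp[OF c1] Sol_const_on_comp[OF c2]
            unfolding K_def by auto
          then show ?thesis using e1 by simp
        next
          case False then show ?thesis using e2 \<open>w \<in> V\<close> by auto
        qed
      qed
    qed
  qed
  have "card (Sol V C R) \<le> card (C \<times> Sol V C (insert (u,v) R))"
    using card_inj_on_le[OF inj img] fC finite_Sol[OF fV fC] by auto
  also have "\<dots> = card C * card (Sol V C (insert (u,v) R))" by (simp add: card_cartesian_product)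
  finally show ?thesis .
qed

lemma Sol_recolor_set:
  assumes fV: "finite V" and fC: "finite C" and fP: "finite P" and PV: "P \<subseteq> V \<times> V" and RV: "R \<subseteq> V \<times> V"
  shows "card (Sol V C R) \<le> card C ^ card P * card (Sol V C (P \<union> R))"
  using fP PV
proof (induction P rule: finite_induct)
  case empty then show ?case by simp
next
  case (insert x P)
  obtain u v where x: "x = (u,v)" by force
  have uv: "u \<in> V" "v \<in> V" using insert x by auto
  have "card (Sol V C R) \<le> card C ^ card P * card (Sol V C (P \<union> R))" using insert by auto
  also have "card (Sol V C (P \<union> R)) \<le> card C * card (Sol V C (insert (u,v) (P \<union> R)))"
    by (rule Sol_recolor[OF fV fC uv]) (use insert RV in auto)
  finally have "card (Sol V C R) \<le> card C ^ card P * (card C * card (Sol V C (insert (u,v) (P \<union> R))))"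
    by (simp add: mult_left_mono)
  then show ?case using insert x by (simp add: algebra_simps)
qed




lemma digit_0: "digit n 0 x = x mod (n+1)" by (simp add: digit_def)
lemma digit_Suc: "digit n (Suc q) x = digit n q (x div (n+1))"
  unfolding digit_def power_Suc by (simp only: div_mult2_eq)
lemma digit_le: "digit n q x \<le> n"
  unfolding digit_def using less_Suc_eq_le by auto

lemma digit_inj:
  "x < (n+1)^m \<Longrightarrow> y < (n+1)^m \<Longrightarrow> (\<forall>q<m. digit n q x = digit n q y) \<Longrightarrow> x = y"
proof (induction m arbitrary: x y)
  case 0 then show ?case by simp
next
  case (Suc m)
  have "x div (n+1) < (n+1)^m" "y div (n+1) < (n+1)^m"
    using Suc.prems by (auto simp: less_mult_imp_div_less mult.commute)
  moreover have "\<forall>q<m. digit n q (x div (n+1)) = digit n q (y div (n+1))"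
    using Suc.prems(3) by (metis digit_Suc Suc_mono)
  ultimately have "x div (n+1) = y div (n+1)" using Suc.IH by blast
  moreover have "x mod (n+1) = y mod (n+1)" using Suc.prems(3)[rule_format, of 0] by (simp add: digit_0)
  ultimately show ?case by (metis div_mult_mod_eq)
qed

lemma digit_surj:
  "(\<forall>q<m. f q \<le> n) \<Longrightarrow> \<exists>x<(n+1)^m. \<forall>q<m. digit n q x = f q"
proof (induction m arbitrary: f)
  case 0 then show ?case by simp
next
  case (Suc m)
  obtain x' where x': "x' < (n+1)^m" "\<forall>q<m. digit n q x' = f (Suc q)"
    using Suc.IH[of "\<lambda>q. f (Suc q)"] Suc.prems by auto
  define x where "x = f 0 + (n+1) * x'"
  have f0: "f 0 < n + 1" using Suc.prems by auto
  have xd1: "x div (n+1) = x'" using f0 unfolding x_def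
    by (subst div_mult_self2) auto
  have xd2: "x mod (n+1) = f 0" using f0 unfolding x_def
    by (simp only: mod_mult_self2, simp)
  note xd = xd1 xd2 xd1[simplified] xd2[simplified]
  have "x < (n+1)^Suc m"
  proof -
    have "x' + 1 \<le> (n+1)^m" using x' by simp
    then have "(n+1) * (x'+1) \<le> (n+1) * (n+1)^m" by (rule mult_le_mono2)
    moreover have "x < (n+1) * (x'+1)" unfolding x_def using f0 by (simp add: algebra_simps)
    ultimately show ?thesis by (metis power_Suc order_less_le_trans)
  qed
  moreover have "\<forall>q<Suc m. digit n q x = f q"
  proof (intro allI impI)
    fix q assume "q < Suc m"
    then show "digit n q x = f q"
      by (cases q) (auto simp: digit_0 digit_Suc xd x')
  qed
  ultimately show ?case by blast
qed



definition relp :: "nat \<Rightarrow> nat \<Rightarrow> nat \<Rightarrow> nat \<Rightarrow> nat \<Rightarrow> bool" where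
  "relp n L p x z \<longleftrightarrow> digit n (p + 1) x = n - digit n p x \<and> digit n (p + 1) z = n - digit n p z
        \<and> (\<forall>q < 2 * L. q \<noteq> p \<and> q \<noteq> p + 1 \<longrightarrow> digit n q x = digit n q z)"

definition Dsupp :: "nat \<Rightarrow> nat \<Rightarrow> nat \<Rightarrow> bool" where
  "Dsupp n L x \<longleftrightarrow> (\<forall>j<L. digit n (2 * j + 1) x = n - digit n (2 * j) x)"

fun cnt :: "nat \<Rightarrow> nat \<Rightarrow> nat list \<Rightarrow> nat \<Rightarrow> nat \<Rightarrow> nat" where
  "cnt n L [] x y = (if x = y then 1 else 0)"
| "cnt n L (p # ws) x y = (\<Sum>z<(n+1)^(2*L). if relp n L p x z then cnt n L ws z y else 0)"

definition Paths :: "nat \<Rightarrow> nat \<Rightarrow> nat list \<Rightarrow> nat list set" where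
  "Paths n L ws = {zs. length zs = Suc (length ws) \<and> (\<forall>i<length zs. zs ! i < (n+1)^(2*L))
      \<and> (\<forall>i<length ws. relp n L (ws ! i) (zs ! i) (zs ! Suc i))}"

definition PL :: "nat \<Rightarrow> nat \<Rightarrow> nat list \<Rightarrow> nat \<Rightarrow> nat \<Rightarrow> nat list set" where
  "PL n L ws x y = {zs \<in> Paths n L ws. zs ! 0 = x \<and> zs ! length ws = y}"

lemma finite_Paths: "finite (Paths n L ws)"
proof -
  have "Paths n L ws \<subseteq> {zs. set zs \<subseteq> {..<(n+1)^(2*L)} \<and> length zs = Suc (length ws)}"
    unfolding Paths_def by (auto simp: in_set_conv_nth)
  moreover have "finite {zs. set zs \<subseteq> {..<(n+1)^(2*L)} \<and> length zs = Suc (length ws)}"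
    by (rule finite_lists_length_eq) simp
  ultimately show ?thesis by (rule finite_subset)
qed

lemma finite_PL: "finite (PL n L ws x y)"
  using finite_Paths unfolding PL_def by auto

lemma PL_Nil: "x < (n+1)^(2*L) \<Longrightarrow> PL n L [] x y = (if x = y then {[x]} else {})"
  unfolding PL_def Paths_def by (auto simp: length_Suc_conv)

lemma PL_Cons: "x < (n+1)^(2*L) \<Longrightarrow>
  PL n L (p # ws) x y = (\<Union>z\<in>{z. z < (n+1)^(2*L) \<and> relp n L p x z}. Cons x ` PL n L ws z y)"
proof (rule Set.set_eqI, rule HOL.iffI)
  fix zs assume "zs \<in> PL n L (p # ws) x y"
  then obtain z zs' where zs: "zs = x # zs'" and "zs' ! 0 = z" and P: "zs \<in> Paths n L (p#ws)" "zs ! Suc (length ws) = y"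
    unfolding PL_def by (cases zs) (auto simp: Paths_def)
  then have l: "length zs' = Suc (length ws)" unfolding Paths_def by auto
  have P1: "\<forall>i<Suc (Suc (length ws)). zs ! i < (n+1)^(2*L)"
    and P2: "\<forall>i<Suc (length ws). relp n L ((p#ws) ! i) (zs ! i) (zs ! Suc i)"
    using P unfolding Paths_def by auto
  have "zs' \<in> PL n L ws z y"
    unfolding PL_def Paths_def
  proof (intro CollectI conjI allI impI)
    fix i assume "i < length zs'"
    then show "zs' ! i < (n+1)^(2*L)" using P1[rule_format, of "Suc i"] l zs by simp
  next
    fix i assume "i < length ws"
    then show "relp n L (ws ! i) (zs' ! i) (zs' ! Suc i)" using P2[rule_format, of "Suc i"] zs by simp
  qed (use l \<open>zs' ! 0 = z\<close> P zs in auto)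
  moreover have "z < (n+1)^(2*L)" using P1[rule_format, of 1] zs \<open>zs' ! 0 = z\<close> by simp
  moreover have "relp n L p x z" using P2[rule_format, of 0] zs \<open>zs' ! 0 = z\<close> by simp
  ultimately show "zs \<in> (\<Union>z\<in>{z. z < (n+1)^(2*L) \<and> relp n L p x z}. Cons x ` PL n L ws z y)"
    using zs by auto
next
  fix zs assume "x < (n+1)^(2*L)" "zs \<in> (\<Union>z\<in>{z. z < (n+1)^(2*L) \<and> relp n L p x z}. Cons x ` PL n L ws z y)"
  then obtain z zs' where zs: "zs = x # zs'" and z: "z < (n+1)^(2*L)" "relp n L p x z" and P: "zs' \<in> PL n L ws z y"
    by auto
  have l: "length zs' = Suc (length ws)" using P unfolding PL_def Paths_def by auto
  show "zs \<in> PL n L (p # ws) x y"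
    unfolding PL_def Paths_def zs
  proof (intro CollectI conjI allI impI)
    show "length (x # zs') = Suc (length (p # ws))" using l by simp
    fix i assume "i < length (x # zs')"
    then show "(x # zs') ! i < (n+1)^(2*L)" using P \<open>x < _\<close> unfolding PL_def Paths_def
      by (cases i) auto
  next
    fix i assume i: "i < length (p # ws)"
    show "relp n L ((p # ws) ! i) ((x # zs') ! i) ((x # zs') ! Suc i)"
    proof (cases i)
      case 0 then show ?thesis using z P unfolding PL_def by auto
    next
      case (Suc j) then show ?thesis using P i unfolding PL_def Paths_def by auto
    qed
  next
    show "(x # zs') ! 0 = x" by simp
    show "(x # zs') ! length (p # ws) = y" using P unfolding PL_def by simp
  qed
qed

lemma cnt_card: "x < (n+1)^(2*L) \<Longrightarrow> cnt n L ws x y = card (PL n L ws x y)"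
proof (induction ws arbitrary: x)
  case Nil then show ?case by (simp add: PL_Nil)
next
  case (Cons p ws)
  let ?Z = "{z. z < (n+1)^(2*L) \<and> relp n L p x z}"
  have "card (PL n L (p # ws) x y) = card (\<Union>z\<in>?Z. Cons x ` PL n L ws z y)"
    using PL_Cons[OF Cons.prems] by simp
  also have "\<dots> = (\<Sum>z\<in>?Z. card (Cons x ` PL n L ws z y))"
  proof (rule card_UN_disjoint)
    show "finite ?Z" by simp
    show "\<forall>i\<in>?Z. finite (Cons x ` PL n L ws i y)" using finite_PL by auto
    show "\<forall>i\<in>?Z. \<forall>j\<in>?Z. i \<noteq> j \<longrightarrow> Cons x ` PL n L ws i y \<inter> Cons x ` PL n L ws j y = {}"
      unfolding PL_def by auto
  qed
  also have "\<dots> = (\<Sum>z\<in>?Z. card (PL n L ws z y))"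
    by (intro sum.cong refl card_image) auto
  also have "\<dots> = (\<Sum>z\<in>?Z. cnt n L ws z y)" using Cons.IH by simp
  also have "\<dots> = cnt n L (p # ws) x y"
    by (simp add: sum.If_cases lessThan_def Collect_conj_eq Int_commute)
  finally show ?case by simp
qed



definition fl :: "nat \<Rightarrow> nat \<Rightarrow> nat \<Rightarrow> nat" where
  "fl n q a = (if odd q then n - a else a)"

lemma fl_le: "fl n q a \<le> n" if "a \<le> n" using that unfolding fl_def by auto
lemma fl_fl: "a \<le> n \<Longrightarrow> fl n q (fl n q a) = a" unfolding fl_def by auto
lemma fl_inj: "a \<le> n \<Longrightarrow> b \<le> n \<Longrightarrow> fl n q a = fl n q b \<longleftrightarrow> a = b" unfolding fl_def by auto
lemma fl_Suc: "a \<le> n \<Longrightarrow> b \<le> n \<Longrightarrow> fl n p a = fl n (Suc p) b \<longleftrightarrow> b = n - a"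
  unfolding fl_def by auto

definition Phi :: "nat \<Rightarrow> nat \<Rightarrow> nat \<Rightarrow> nat list \<Rightarrow> (nat \<times> nat \<Rightarrow> nat)" where
  "Phi n L k zs = restrict (\<lambda>(i,q). fl n q (digit n q (zs ! i))) ({..k} \<times> {..<2*L})"

definition AllL :: "nat \<Rightarrow> nat \<Rightarrow> nat \<Rightarrow> nat list set" where
  "AllL n L k = {zs. length zs = Suc k \<and> (\<forall>i<Suc k. zs ! i < (n+1)^(2*L))}"

lemma Phi_PiE: "Phi n L k zs \<in> ({..k} \<times> {..<2*L}) \<rightarrow>\<^sub>E {..n}"
  unfolding Phi_def by (auto intro: fl_le digit_le)

lemma Phi_inj: "inj_on (Phi n L k) (AllL n L k)"
proof (rule inj_onI)
  fix zs1 zs2 assume z1: "zs1 \<in> AllL n L k" and z2: "zs2 \<in> AllL n L k" and eq: "Phi n L k zs1 = Phi n L k zs2"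
  show "zs1 = zs2"
  proof (rule nth_equalityI)
    show "length zs1 = length zs2" using z1 z2 unfolding AllL_def by auto
    fix i assume "i < length zs1"
    then have i: "i \<le> k" using z1 unfolding AllL_def by auto
    have "\<forall>q<2*L. digit n q (zs1 ! i) = digit n q (zs2 ! i)"
    proof (intro allI impI)
      fix q assume q: "q < 2*L"
      have "Phi n L k zs1 (i,q) = Phi n L k zs2 (i,q)" using eq by simp
      then have "fl n q (digit n q (zs1 ! i)) = fl n q (digit n q (zs2 ! i))"
        unfolding Phi_def using i q by auto
      then show "digit n q (zs1 ! i) = digit n q (zs2 ! i)" using fl_inj digit_le by blast
    qed
    moreover have "zs1 ! i < (n+1)^(2*L)" "zs2 ! i < (n+1)^(2*L)" using z1 z2 i unfolding AllL_def by auto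
    ultimately show "zs1 ! i = zs2 ! i" using digit_inj by blast
  qed
qed

lemma Phi_surj:
  assumes c: "c \<in> ({..k} \<times> {..<2*L}) \<rightarrow>\<^sub>E {..n}"
  shows "\<exists>zs\<in>AllL n L k. Phi n L k zs = c"
proof -
  have ex: "\<exists>x<(n+1)^(2*L). \<forall>q<2*L. digit n q x = fl n q (c (i,q))" if "i \<le> k" for i
    by (rule digit_surj) (use c that in \<open>auto intro!: fl_le\<close>)
  define xs where "xs i = (SOME x. x<(n+1)^(2*L) \<and> (\<forall>q<2*L. digit n q x = fl n q (c (i,q))))" for i
  have xs: "xs i < (n+1)^(2*L) \<and> (\<forall>q<2*L. digit n q (xs i) = fl n q (c (i,q)))" if "i \<le> k" for i
    unfolding xs_def by (rule someI_ex) (use ex[OF that] in blast)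
  define zs where "zs = map xs [0..<Suc k]"
  have "zs \<in> AllL n L k" unfolding AllL_def zs_def using xs
    by (auto simp del: upt_Suc)
  moreover have "Phi n L k zs = c"
  proof
    fix iq :: "nat \<times> nat"
    obtain i q where iq: "iq = (i,q)" by force
    show "Phi n L k zs iq = c iq"
    proof (cases "i \<le> k \<and> q < 2*L")
      case True
      then have "zs ! i = xs i" unfolding zs_def by (simp del: upt_Suc add: nth_map_upt)
      then have "Phi n L k zs iq = fl n q (fl n q (c (i,q)))" unfolding Phi_def iq using True xs by auto
      also have "\<dots> = c (i,q)" using c True by (intro fl_fl) auto
      finally show ?thesis using iq by simp
    next
      case False then show ?thesis using c unfolding Phi_def iq by (auto simp: PiE_def extensional_def)
    qed
  qed
  ultimately show ?thesis by blast
qed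

definition Rw :: "nat \<Rightarrow> nat list \<Rightarrow> ((nat \<times> nat) \<times> (nat \<times> nat)) set" where
  "Rw L ws = (\<Union>i<length ws. {((i, ws!i), (i, Suc (ws!i))), ((Suc i, ws!i), (Suc i, Suc (ws!i)))}
        \<union> {((i,q),(Suc i,q)) | q. q < 2*L \<and> q \<noteq> ws!i \<and> q \<noteq> Suc (ws!i)})"

lemma relp_Phi:
  assumes x: "x < (n+1)^(2*L)" and z: "z < (n+1)^(2*L)" and p: "Suc p < 2*L"
  shows "relp n L p x z \<longleftrightarrow>
    fl n p (digit n p x) = fl n (Suc p) (digit n (Suc p) x) \<and>
    fl n p (digit n p z) = fl n (Suc p) (digit n (Suc p) z) \<and>
    (\<forall>q<2*L. q \<noteq> p \<and> q \<noteq> Suc p \<longrightarrow> fl n q (digit n q x) = fl n q (digit n q z))"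
  unfolding relp_def using fl_Suc fl_inj digit_le by auto

lemma Phi_Sol_iff:
  assumes zs: "zs \<in> AllL n L (length ws)" and ws: "\<forall>p\<in>set ws. Suc p < 2*L"
  shows "Phi n L (length ws) zs \<in> Sol ({..length ws} \<times> {..<2*L}) {..n} (Rw L ws) \<longleftrightarrow> zs \<in> Paths n L ws"
proof -
  let ?k = "length ws"
  let ?c = "Phi n L ?k zs"
  have cv: "?c (i,q) = fl n q (digit n q (zs ! i))" if "i \<le> ?k" "q < 2*L" for i q
    unfolding Phi_def using that by auto
  have zi: "zs ! i < (n+1)^(2*L)" if "i \<le> ?k" for i using zs that unfolding AllL_def by auto
  have layer: "(\<forall>(a,b)\<in>(\<Union>i\<in>{i}. {((i, ws!i), (i, Suc (ws!i))), ((Suc i, ws!i), (Suc i, Suc (ws!i)))}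
        \<union> {((i,q),(Suc i,q)) | q. q < 2*L \<and> q \<noteq> ws!i \<and> q \<noteq> Suc (ws!i)}). ?c a = ?c b)
      \<longleftrightarrow> relp n L (ws!i) (zs!i) (zs!Suc i)" if i: "i < ?k" for i
  proof -
    have p: "Suc (ws!i) < 2*L" using ws i by auto
    show ?thesis using relp_Phi[OF zi zi p, of i "Suc i"] i p cv by (auto simp: cv)
  qed
  have "?c \<in> Sol ({..?k} \<times> {..<2*L}) {..n} (Rw L ws) \<longleftrightarrow>
      (\<forall>i<?k. \<forall>(a,b)\<in>(\<Union>i\<in>{i}. {((i, ws!i), (i, Suc (ws!i))), ((Suc i, ws!i), (Suc i, Suc (ws!i)))}
        \<union> {((i,q),(Suc i,q)) | q. q < 2*L \<and> q \<noteq> ws!i \<and> q \<noteq> Suc (ws!i)}). ?c a = ?c b)"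
    unfolding Sol_def Rw_def using Phi_PiE[of n L ?k zs] by blast
  also have "\<dots> \<longleftrightarrow> (\<forall>i<?k. relp n L (ws!i) (zs!i) (zs!Suc i))" using layer by auto
  also have "\<dots> \<longleftrightarrow> zs \<in> Paths n L ws" using zs unfolding Paths_def AllL_def by auto
  finally show ?thesis .
qed



lemma comb_main:
  assumes ws: "\<forall>p\<in>set ws. Suc p < 2*L"
  shows "(\<Sum>x<(n+1)^(2*L). cnt n L ws x x)
    \<le> (n+1)^L * (\<Sum>x\<in>{x. x < (n+1)^(2*L) \<and> Dsupp n L x}. \<Sum>y\<in>{y. y < (n+1)^(2*L) \<and> Dsupp n L y}. cnt n L ws x y)"
proof -
  let ?N = "(n+1)^(2*L)"
  let ?k = "length ws"
  let ?V = "{..?k} \<times> {..<2*L}"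
  let ?C = "{..n}"
  let ?DS = "{x. x < ?N \<and> Dsupp n L x}"
  define CP where "CP = {zs \<in> Paths n L ws. zs ! 0 = zs ! ?k}"
  define DP where "DP = {zs \<in> Paths n L ws. Dsupp n L (zs ! 0) \<and> Dsupp n L (zs ! ?k)}"
  define T where "T = {((0::nat,q),(?k,q)) | q. q < 2*L}"
  define Db where "Db = (\<lambda>j. ((0::nat, 2*j), (0::nat, Suc (2*j)))) ` {..<L}"
  define Dt where "Dt = (\<lambda>j. ((?k, 2*j), (?k, Suc (2*j)))) ` {..<L}"
  have fV: "finite ?V" and fC: "finite ?C" by auto
  have PA: "Paths n L ws \<subseteq> AllL n L ?k" unfolding Paths_def AllL_def by auto
  have lhs: "(\<Sum>x<?N. cnt n L ws x x) = card CP"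
  proof -
    have "(\<Sum>x<?N. cnt n L ws x x) = (\<Sum>x<?N. card (PL n L ws x x))" by (simp add: cnt_card)
    also have "\<dots> = card (\<Union>x<?N. PL n L ws x x)"
      by (rule card_UN_disjoint[symmetric]) (auto simp: PL_def finite_Paths)
    also have "(\<Union>x<?N. PL n L ws x x) = CP"
      unfolding CP_def PL_def Paths_def by auto
    finally show ?thesis .
  qed
  have rhs: "(\<Sum>x\<in>?DS. \<Sum>y\<in>?DS. cnt n L ws x y) = card DP"
  proof -
    have "(\<Sum>x\<in>?DS. \<Sum>y\<in>?DS. cnt n L ws x y) = (\<Sum>xy\<in>?DS \<times> ?DS. card (PL n L ws (fst xy) (snd xy)))"
      by (simp add: sum.cartesian_product cnt_card case_prod_beta)
    also have "\<dots> = card (\<Union>xy\<in>?DS \<times> ?DS. PL n L ws (fst xy) (snd xy))"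
      by (rule card_UN_disjoint[symmetric]) (auto simp: PL_def finite_Paths)
    also have "(\<Union>xy\<in>?DS \<times> ?DS. PL n L ws (fst xy) (snd xy)) = DP"
    proof (rule Set.set_eqI, rule HOL.iffI)
      fix zs assume "zs \<in> (\<Union>xy\<in>?DS \<times> ?DS. PL n L ws (fst xy) (snd xy))"
      then show "zs \<in> DP" unfolding DP_def PL_def by auto
    next
      fix zs assume zs: "zs \<in> DP"
      then have "zs ! 0 < ?N" "zs ! ?k < ?N" unfolding DP_def Paths_def by auto
      with zs show "zs \<in> (\<Union>xy\<in>?DS \<times> ?DS. PL n L ws (fst xy) (snd xy))"
        unfolding DP_def PL_def by (auto intro!: bexI[of _ "(zs!0, zs!?k)"])
    qed
    finally show ?thesis .
  qed
  have wsi: "\<forall>i<?k. Suc (ws!i) < 2*L" using ws by auto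
  have RV: "Rw L ws \<subseteq> ?V \<times> ?V" unfolding Rw_def using wsi by auto
  have TV: "T \<subseteq> ?V \<times> ?V" unfolding T_def by auto
  have DbV: "Db \<subseteq> ?V \<times> ?V" unfolding Db_def by auto
  have s1: "Phi n L ?k ` CP \<subseteq> Sol ?V ?C (Rw L ws \<union> T)"
  proof
    fix c assume "c \<in> Phi n L ?k ` CP"
    then obtain zs where zs: "zs \<in> CP" and c: "c = Phi n L ?k zs" by auto
    have zA: "zs \<in> AllL n L ?k" using zs PA unfolding CP_def by auto
    have "c \<in> Sol ?V ?C (Rw L ws)" using Phi_Sol_iff[OF zA ws] zs c unfolding CP_def by auto
    moreover have "\<forall>(a,b)\<in>T. c a = c b" using zs c unfolding T_def CP_def Phi_def by auto
    ultimately show "c \<in> Sol ?V ?C (Rw L ws \<union> T)" unfolding Sol_def by auto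
  qed
  have "card CP = card (Phi n L ?k ` CP)"
    by (rule card_image[symmetric], rule inj_on_subset[OF Phi_inj]) (use PA in \<open>auto simp: CP_def\<close>)
  also have "\<dots> \<le> card (Sol ?V ?C (Rw L ws \<union> T))"
    by (rule card_mono[OF finite_Sol[OF fV fC] s1])
  also have "\<dots> \<le> card ?C ^ card Db * card (Sol ?V ?C (Db \<union> (Rw L ws \<union> T)))"
    by (rule Sol_recolor_set[OF fV fC _ DbV]) (use RV TV in \<open>auto simp: Db_def\<close>)
  also have "\<dots> \<le> (n+1)^L * card (Sol ?V ?C (Rw L ws \<union> Db \<union> Dt))"
  proof (rule mult_le_mono)
    have "card Db \<le> L" unfolding Db_def using card_image_le[of "{..<L}"] by auto
    then show "card ?C ^ card Db \<le> (n+1)^L" by (simp add: power_increasing)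
    show "card (Sol ?V ?C (Db \<union> (Rw L ws \<union> T))) \<le> card (Sol ?V ?C (Rw L ws \<union> Db \<union> Dt))"
    proof (rule card_mono[OF finite_Sol[OF fV fC]])
      show "Sol ?V ?C (Db \<union> (Rw L ws \<union> T)) \<subseteq> Sol ?V ?C (Rw L ws \<union> Db \<union> Dt)"
      proof
        fix c assume c: "c \<in> Sol ?V ?C (Db \<union> (Rw L ws \<union> T))"
        have "\<forall>(a,b)\<in>Dt. c a = c b"
        proof (clarify)
          fix a b assume "(a,b) \<in> Dt"
          then obtain j where j: "j < L" "a = (?k, 2*j)" "b = (?k, Suc (2*j))" unfolding Dt_def by auto
          have cR: "\<forall>(a,b)\<in>Db \<union> (Rw L ws \<union> T). c a = c b" using c by (simp add: Sol_def)
          have t1: "((0,2*j),(?k,2*j)) \<in> T" "((0,Suc (2*j)),(?k,Suc (2*j))) \<in> T"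
            unfolding T_def using j by auto
          have t2: "((0,2*j),(0,Suc (2*j))) \<in> Db" unfolding Db_def using j by auto
          have "c (?k, 2*j) = c (0, 2*j)" using bspec[OF cR, of "((0,2*j),(?k,2*j))"] t1 by auto
          also have "\<dots> = c (0, Suc (2*j))" using bspec[OF cR, of "((0,2*j),(0,Suc (2*j)))"] t2 by auto
          also have "\<dots> = c (?k, Suc (2*j))" using bspec[OF cR, of "((0,Suc (2*j)),(?k,Suc (2*j)))"] t1 by auto
          finally show "c a = c b" using j by simp
        qed
        with c show "c \<in> Sol ?V ?C (Rw L ws \<union> Db \<union> Dt)" unfolding Sol_def by (simp add: ball_Un)
      qed
    qed
  qed
  also have "card (Sol ?V ?C (Rw L ws \<union> Db \<union> Dt)) \<le> card DP"
  proof -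
    have "Sol ?V ?C (Rw L ws \<union> Db \<union> Dt) \<subseteq> Phi n L ?k ` DP"
    proof
      fix c assume c: "c \<in> Sol ?V ?C (Rw L ws \<union> Db \<union> Dt)"
      then obtain zs where zA: "zs \<in> AllL n L ?k" and cz: "Phi n L ?k zs = c"
        using Phi_surj unfolding Sol_def by blast
      have "c \<in> Sol ?V ?C (Rw L ws)" using c unfolding Sol_def by auto
      then have zP: "zs \<in> Paths n L ws" using Phi_Sol_iff[OF zA ws] cz by simp
      have cv: "c (i,q) = fl n q (digit n q (zs ! i))" if "i \<le> ?k" "q < 2*L" for i q
        using cz that unfolding Phi_def by auto
      have "Dsupp n L (zs ! i)" if i: "i = 0 \<or> i = ?k" for i
        unfolding Dsupp_def
      proof (intro allI impI)
        fix j assume j: "j < L"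
        have cR: "\<forall>(a,b)\<in>Rw L ws \<union> Db \<union> Dt. c a = c b" using c by (simp add: Sol_def)
        have "((i, 2*j), (i, Suc (2*j))) \<in> Db \<union> Dt" using i j unfolding Db_def Dt_def by auto
        then have "c (i, 2*j) = c (i, Suc (2*j))" using bspec[OF cR, of "((i, 2*j), (i, Suc (2*j)))"] by auto
        then have "fl n (2*j) (digit n (2*j) (zs!i)) = fl n (Suc (2*j)) (digit n (Suc (2*j)) (zs!i))"
          using cv i j by auto
        then show "digit n (2 * j + 1) (zs!i) = n - digit n (2 * j) (zs!i)"
          using fl_Suc digit_le by simp
      qed
      then have "zs \<in> DP" unfolding DP_def using zP by auto
      then show "c \<in> Phi n L ?k ` DP" using cz by auto
    qed
    then have "card (Sol ?V ?C (Rw L ws \<union> Db \<union> Dt)) \<le> card (Phi n L ?k ` DP)"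
    proof (rule card_mono[rotated])
      have "finite DP" unfolding DP_def using finite_Paths by auto
      then show "finite (Phi n L ?k ` DP)" by simp
    qed
    also have "\<dots> \<le> card DP" by (rule card_image_le) (use finite_Paths in \<open>auto simp: DP_def\<close>)
    finally show ?thesis .
  qed
  finally show ?thesis using lhs rhs by (simp add: mult_le_mono2)
qed



definition sg :: "nat \<Rightarrow> nat \<Rightarrow> nat \<Rightarrow> real" where
  "sg n L x = (\<Prod>j<L. (-1::real) ^ digit n (2 * j) x)"

definition ee :: "nat \<Rightarrow> nat \<Rightarrow> nat \<Rightarrow> nat \<Rightarrow> nat \<Rightarrow> real" where
  "ee n L p x z = (if relp n L p x z then sg n L x * sg n L z else 0)"

definition Af :: "nat \<Rightarrow> nat \<Rightarrow> nat \<Rightarrow> nat \<Rightarrow> real" where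
  "Af n L x z = (\<Sum>p | p + 1 < 2 * L. ee n L p x z)"

definition Dv :: "nat \<Rightarrow> nat \<Rightarrow> nat \<Rightarrow> real" where
  "Dv n L x = (if Dsupp n L x then sg n L x else 0)"

fun pw :: "(nat \<Rightarrow> nat \<Rightarrow> real) \<Rightarrow> nat \<Rightarrow> nat \<Rightarrow> nat \<Rightarrow> nat \<Rightarrow> real" where
  "pw M N 0 i j = (if i = j then 1 else 0)"
| "pw M N (Suc k) i j = (\<Sum>l<N. M i l * pw M N k l j)"

fun Wf :: "nat \<Rightarrow> nat \<Rightarrow> nat list \<Rightarrow> nat \<Rightarrow> nat \<Rightarrow> real" where
  "Wf n L [] x y = (if x = y then 1 else 0)"
| "Wf n L (p # ws) x y = (\<Sum>z<(n+1)^(2*L). ee n L p x z * Wf n L ws z y)"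

definition words :: "nat \<Rightarrow> nat \<Rightarrow> nat list set" where
  "words L k = {ws. length ws = k \<and> (\<forall>p\<in>set ws. Suc p < 2 * L)}"

lemma sg_sq: "sg n L x * sg n L x = 1"
  unfolding sg_def by (simp add: prod.distrib[symmetric] power_add[symmetric])

lemma Wf_cnt: "Wf n L ws x y = sg n L x * sg n L y * real (cnt n L ws x y)"
proof (induction ws arbitrary: x)
  case Nil then show ?case using sg_sq by auto
next
  case (Cons p ws)
  have "Wf n L (p # ws) x y = (\<Sum>z<(n+1)^(2*L). sg n L x * sg n L y * (if relp n L p x z then real (cnt n L ws z y) else 0))"
    by (auto simp: Cons.IH ee_def intro!: sum.cong) (metis mult.assoc mult.left_commute mult_1_right sg_sq)
  also have "\<dots> = sg n L x * sg n L y * (\<Sum>z<(n+1)^(2*L). (if relp n L p x z then real (cnt n L ws z y) else 0))"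
    by (simp add: sum_distrib_left)
  also have "\<dots> = sg n L x * sg n L y * real (cnt n L (p # ws) x y)"
    by (auto simp: of_nat_sum intro!: sum.cong)
  finally show ?case .
qed

lemma finite_words: "finite (words L k)"
proof -
  have "words L k \<subseteq> {ws. set ws \<subseteq> {..<2*L} \<and> length ws = k}" unfolding words_def by auto
  moreover have "finite {ws. set ws \<subseteq> {..<2*L} \<and> length ws = k}" by (rule finite_lists_length_eq) simp
  ultimately show ?thesis by (rule finite_subset)
qed

lemma words_Suc: "bij_betw (\<lambda>(p,ws). p # ws) ({p. p + 1 < 2 * L} \<times> words L k) (words L (Suc k))"
proof (rule bij_betwI')
  show "\<And>x y. x \<in> {p. p + 1 < 2 * L} \<times> words L k \<Longrightarrow> y \<in> {p. p + 1 < 2 * L} \<times> words L k \<Longrightarrow>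
    ((case x of (p, ws) \<Rightarrow> p # ws) = (case y of (p, ws) \<Rightarrow> p # ws)) = (x = y)" by auto
  show "\<And>x. x \<in> {p. p + 1 < 2 * L} \<times> words L k \<Longrightarrow> (case x of (p, ws) \<Rightarrow> p # ws) \<in> words L (Suc k)"
    unfolding words_def by auto
  fix y assume "y \<in> words L (Suc k)"
  then obtain p ws where "y = p # ws" "p + 1 < 2*L" "ws \<in> words L k" unfolding words_def
    by (cases y) auto
  then show "\<exists>x\<in>{p. p + 1 < 2 * L} \<times> words L k. y = (case x of (p, ws) \<Rightarrow> p # ws)" by auto
qed

lemma pw_words: "pw (Af n L) ((n+1)^(2*L)) k x y = (\<Sum>ws\<in>words L k. Wf n L ws x y)"
proof (induction k arbitrary: x)
  case 0
  have "words L 0 = {[]}" unfolding words_def by auto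
  then show ?case by simp
next
  case (Suc k)
  let ?N = "(n+1)^(2*L)"
  let ?P = "{p. p + 1 < 2 * L}"
  have fP: "finite ?P" by (rule finite_subset[of _ "{..<2*L}"]) auto
  have "pw (Af n L) ?N (Suc k) x y = (\<Sum>l<?N. \<Sum>p\<in>?P. \<Sum>ws\<in>words L k. ee n L p x l * Wf n L ws l y)"
    by (simp only: pw.simps Suc.IH Af_def sum_distrib_left sum_distrib_right) (intro sum.cong refl, rule sum.swap)
  also have "\<dots> = (\<Sum>p\<in>?P. \<Sum>l<?N. \<Sum>ws\<in>words L k. ee n L p x l * Wf n L ws l y)"
    by (rule sum.swap)
  also have "\<dots> = (\<Sum>p\<in>?P. \<Sum>ws\<in>words L k. \<Sum>l<?N. ee n L p x l * Wf n L ws l y)"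
    by (intro sum.cong refl, rule sum.swap)
  also have "\<dots> = (\<Sum>p\<in>?P. \<Sum>ws\<in>words L k. Wf n L (p # ws) x y)"
    by (simp only: Wf.simps)
  also have "\<dots> = (\<Sum>pw\<in>?P \<times> words L k. Wf n L ((\<lambda>(p,ws). p # ws) pw) x y)"
    by (subst sum.cartesian_product) (simp add: split_def)
  also have "\<dots> = (\<Sum>ws\<in>words L (Suc k). Wf n L ws x y)"
    by (rule sum.reindex_bij_betw[OF words_Suc])
  finally show ?case .
qed

lemmas pw_words' = pw_words[simplified]
lemmas Wf_cnt' = Wf_cnt[simplified]

lemma key_fun:
  shows "real ((n+1)^L) * (\<Sum>x<(n+1)^(2*L). \<Sum>y<(n+1)^(2*L). Dv n L x * pw (Af n L) ((n+1)^(2*L)) k x y * Dv n L y)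
      \<ge> (\<Sum>x<(n+1)^(2*L). pw (Af n L) ((n+1)^(2*L)) k x x)
    \<and> (\<Sum>x<(n+1)^(2*L). pw (Af n L) ((n+1)^(2*L)) k x x) \<ge> 0"
proof -
  let ?N = "(n+1)^(2*L)"
  let ?DS = "{x. x < ?N \<and> Dsupp n L x}"
  have tr: "(\<Sum>x<?N. pw (Af n L) ?N k x x) = (\<Sum>ws\<in>words L k. real (\<Sum>x<?N. cnt n L ws x x))"
    by (simp add: pw_words' Wf_cnt' sum.swap[of _ "words L k"] of_nat_sum)
      (simp add: mult.assoc[symmetric] sg_sq)
  have dd: "Dv n L x * pw (Af n L) ?N k x y * Dv n L y =
       (\<Sum>ws\<in>words L k. if Dsupp n L x \<and> Dsupp n L y then real (cnt n L ws x y) else 0)" for x y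
  proof -
    have "Dv n L x * pw (Af n L) ?N k x y * Dv n L y = Dv n L x * (\<Sum>ws\<in>words L k. Wf n L ws x y) * Dv n L y"
      by (simp only: pw_words)
    also have "\<dots> = (\<Sum>ws\<in>words L k. Dv n L x * Wf n L ws x y * Dv n L y)"
      by (simp add: sum_distrib_left sum_distrib_right)
    also have "\<dots> = (\<Sum>ws\<in>words L k. Dv n L x * sg n L x * (Dv n L y * sg n L y) * real (cnt n L ws x y))"
      by (intro sum.cong refl) (simp only: Wf_cnt mult_ac)
    also have "\<dots> = (\<Sum>ws\<in>words L k. if Dsupp n L x \<and> Dsupp n L y then real (cnt n L ws x y) else 0)"
      by (intro sum.cong refl) (simp add: Dv_def sg_sq)
    finally show ?thesis .
  qed
  have num: "(\<Sum>x<?N. \<Sum>y<?N. Dv n L x * pw (Af n L) ?N k x y * Dv n L y)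
      = (\<Sum>ws\<in>words L k. real (\<Sum>x\<in>?DS. \<Sum>y\<in>?DS. cnt n L ws x y))"
  proof -
    have "(\<Sum>x<?N. \<Sum>y<?N. Dv n L x * pw (Af n L) ?N k x y * Dv n L y)
      = (\<Sum>ws\<in>words L k. \<Sum>x<?N. \<Sum>y<?N. if Dsupp n L x \<and> Dsupp n L y then real (cnt n L ws x y) else 0)"
      unfolding dd
    proof -
      have "(\<Sum>x<?N. \<Sum>y<?N. \<Sum>ws\<in>words L k. if Dsupp n L x \<and> Dsupp n L y then real (cnt n L ws x y) else 0)
        = (\<Sum>x<?N. \<Sum>ws\<in>words L k. \<Sum>y<?N. if Dsupp n L x \<and> Dsupp n L y then real (cnt n L ws x y) else 0)"
        by (intro sum.cong refl, rule sum.swap)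
      also have "\<dots> = (\<Sum>ws\<in>words L k. \<Sum>x<?N. \<Sum>y<?N. if Dsupp n L x \<and> Dsupp n L y then real (cnt n L ws x y) else 0)"
        by (rule sum.swap)
      finally show "(\<Sum>x<?N. \<Sum>y<?N. \<Sum>ws\<in>words L k. if Dsupp n L x \<and> Dsupp n L y then real (cnt n L ws x y) else 0)
        = (\<Sum>ws\<in>words L k. \<Sum>x<?N. \<Sum>y<?N. if Dsupp n L x \<and> Dsupp n L y then real (cnt n L ws x y) else 0)" .
    qed
    also have "\<dots> = (\<Sum>ws\<in>words L k. real (\<Sum>x\<in>?DS. \<Sum>y\<in>?DS. cnt n L ws x y))"
    proof (intro sum.cong refl)
      fix ws
      have "(\<Sum>x<?N. \<Sum>y<?N. if Dsupp n L x \<and> Dsupp n L y then real (cnt n L ws x y) else 0)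
          = (\<Sum>x<?N. if Dsupp n L x then (\<Sum>y\<in>?DS. real (cnt n L ws x y)) else 0)"
        by (intro sum.cong refl) (auto simp: sum.If_cases lessThan_def Collect_conj_eq Int_commute)
      also have "\<dots> = (\<Sum>x\<in>?DS. \<Sum>y\<in>?DS. real (cnt n L ws x y))"
        by (simp add: sum.If_cases lessThan_def Collect_conj_eq Int_commute)
      finally show "(\<Sum>x<?N. \<Sum>y<?N. if Dsupp n L x \<and> Dsupp n L y then real (cnt n L ws x y) else 0)
          = real (\<Sum>x\<in>?DS. \<Sum>y\<in>?DS. cnt n L ws x y)" by (simp add: of_nat_sum)
    qed
    finally show ?thesis .
  qed
  have "(\<Sum>ws\<in>words L k. real (\<Sum>x<?N. cnt n L ws x x))
      \<le> (\<Sum>ws\<in>words L k. real ((n+1)^L) * real (\<Sum>x\<in>?DS. \<Sum>y\<in>?DS. cnt n L ws x y))"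
  proof (rule sum_mono)
    fix ws assume "ws \<in> words L k"
    then have "\<forall>p\<in>set ws. Suc p < 2*L" unfolding words_def by auto
    from comb_main[OF this, of n]
    show "real (\<Sum>x<?N. cnt n L ws x x) \<le> real ((n+1)^L) * real (\<Sum>x\<in>?DS. \<Sum>y\<in>?DS. cnt n L ws x y)"
      by (metis (mono_tags, lifting) of_nat_le_iff of_nat_mult)
  qed
  then show ?thesis unfolding tr num by (simp add: sum_distrib_left sum_nonneg)
qed



lemma neg1_pow_eq: "even (a + b) \<Longrightarrow> (-1::real) ^ a = (-1) ^ b"
  by (simp add: minus_one_power_iff)

lemma gauge:
  assumes p: "p + 1 < 2 * L" and r: "relp n L p x z"
  shows "(-1::real) ^ (digit n p x + digit n p z) = sg n L x * sg n L z"
proof -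
  define j0 where "j0 = (p + 1) div 2"
  have j0L: "j0 < L" using p unfolding j0_def by auto
  have j0p: "2 * j0 = p \<or> 2 * j0 = p + 1" unfolding j0_def by presburger
  have rr: "digit n (p + 1) x = n - digit n p x" "digit n (p + 1) z = n - digit n p z"
    "\<And>q. q < 2 * L \<Longrightarrow> q \<noteq> p \<Longrightarrow> q \<noteq> p + 1 \<Longrightarrow> digit n q x = digit n q z"
    using r unfolding relp_def by auto
  have "sg n L x * sg n L z = (\<Prod>j<L. (-1::real) ^ (digit n (2 * j) x + digit n (2 * j) z))"
    unfolding sg_def by (simp add: prod.distrib[symmetric] power_add)
  also have "\<dots> = (-1::real) ^ (digit n (2 * j0) x + digit n (2 * j0) z) *
      (\<Prod>j\<in>{..<L} - {j0}. (-1::real) ^ (digit n (2 * j) x + digit n (2 * j) z))"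
    using j0L by (simp add: prod.remove)
  also have "(\<Prod>j\<in>{..<L} - {j0}. (-1::real) ^ (digit n (2 * j) x + digit n (2 * j) z)) = 1"
  proof (rule prod.neutral, rule ballI)
    fix j assume j: "j \<in> {..<L} - {j0}"
    then have "2 * j \<noteq> p" "2 * j \<noteq> p + 1" using j0p unfolding j0_def by auto
    then have "digit n (2 * j) x = digit n (2 * j) z" using rr(3)[of "2 * j"] j by auto
    then show "(-1::real) ^ (digit n (2 * j) x + digit n (2 * j) z) = 1" by simp
  qed
  also have "(-1::real) ^ (digit n (2 * j0) x + digit n (2 * j0) z) = (-1) ^ (digit n p x + digit n p z)"
  proof (cases "2 * j0 = p")
    case True then show ?thesis by simp
  next
    case False
    then have e: "2 * j0 = p + 1" using j0p by auto
    have "digit n p x \<le> n" "digit n p z \<le> n" by (auto intro: digit_le)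
    then have "even ((digit n (2 * j0) x + digit n (2 * j0) z) + (digit n p x + digit n p z))"
      unfolding e rr by (simp add: algebra_simps)
    then show ?thesis by (rule neg1_pow_eq)
  qed
  finally show ?thesis by simp
qed

lemma H_AF_entry:
  assumes "i < hdim n L" "j < hdim n L"
  shows "H_AF n L $$ (i, j) = - Af n L i j"
proof -
  have sp: "singlet_proj n L p $$ (i, j) * real (n + 1) = ee n L p i j" if p: "p + 1 < 2 * L" for p
  proof -
    have "singlet_proj n L p $$ (i, j) = (if relp n L p i j then (-1) ^ (digit n p i + digit n p j) / real (n + 1) else 0)"
      unfolding singlet_proj_def relp_def using assms by simp
    then show ?thesis unfolding ee_def using gauge[OF p] by auto
  qed
  have "H_AF n L $$ (i, j) = - real (n + 1) * (\<Sum>p | p + 1 < 2 * L. singlet_proj n L p $$ (i, j))"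
    unfolding H_AF_def using assms by (subst index_mat) auto
  also have "\<dots> = - (\<Sum>p | p + 1 < 2 * L. singlet_proj n L p $$ (i, j) * real (n + 1))"
    by (simp only: mult_minus_left sum_distrib_left mult.commute sum_negf)
  also have "\<dots> = - (\<Sum>p | p + 1 < 2 * L. ee n L p i j)"
    using sp by (intro arg_cong[where f=uminus] sum.cong refl) auto
  finally show ?thesis unfolding Af_def .
qed

lemma D_vec_entry: "x < hdim n L \<Longrightarrow> D_vec n L $ x = Dv n L x"
proof -
  assume x: "x < hdim n L"
  have e: "D_vec n L $ x = (\<Prod>j<L. (if digit n (2 * j + 1) x = n - digit n (2 * j) x
              then (-1) ^ digit n (2 * j) x else 0))" unfolding D_vec_def using x by simp
  show ?thesis
  proof (cases "Dsupp n L x")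
    case True
    then show ?thesis unfolding e Dv_def sg_def Dsupp_def by (auto intro!: prod.cong)
  next
    case False
    then obtain j where j: "j < L" "digit n (2 * j + 1) x \<noteq> n - digit n (2 * j) x" unfolding Dsupp_def by auto
    have "(\<Prod>j<L. (if digit n (2 * j + 1) x = n - digit n (2 * j) x
              then (-1::real) ^ digit n (2 * j) x else 0)) = 0" by (rule prod_zero) (use j in auto)
    then show ?thesis unfolding e Dv_def using False by simp
  qed
qed

lemma dims: "H_AF n L \<in> carrier_mat (hdim n L) (hdim n L)" "dim_vec (D_vec n L) = hdim n L"
  unfolding H_AF_def D_vec_def by auto

lemma hdim_eq: "hdim n L = (n+1)^(2*L)" unfolding hdim_def by simp

lemma pw_right: "i < N \<Longrightarrow> j < N \<Longrightarrow> pw M N (Suc k) i j = (\<Sum>l<N. pw M N k i l * M l j)"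
proof (induction k arbitrary: i)
  case 0
  have "(\<Sum>l<N. M i l * (if l = j then 1 else 0)) = (\<Sum>l<N. if l = j then M i l else 0)"
    by (intro sum.cong) auto
  also have "\<dots> = M i j" using 0 by simp
  also have "\<dots> = (\<Sum>l<N. if i = l then M l j else 0)" using 0 by simp
  also have "\<dots> = (\<Sum>l<N. (if i = l then 1 else 0) * M l j)" by (intro sum.cong) auto
  finally show ?case by simp
next
  case (Suc k)
  have "pw M N (Suc (Suc k)) i j = (\<Sum>l<N. M i l * (\<Sum>m<N. pw M N k l m * M m j))"
    using Suc.IH Suc.prems by simp
  also have "\<dots> = (\<Sum>m<N. (\<Sum>l<N. M i l * pw M N k l m) * M m j)"
    by (simp add: sum_distrib_left sum_distrib_right mult.assoc) (rule sum.swap)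
  finally show ?case by simp
qed

lemma pow_pw:
  assumes A: "A \<in> carrier_mat N N" and M: "\<And>i j. i < N \<Longrightarrow> j < N \<Longrightarrow> A $$ (i, j) = M i j"
  shows "i < N \<Longrightarrow> j < N \<Longrightarrow> (A ^\<^sub>m k) $$ (i, j) = pw M N k i j"
proof (induction k arbitrary: j)
  case 0 then show ?case using A by simp
next
  case (Suc k)
  have "(A ^\<^sub>m Suc k) $$ (i, j) = (\<Sum>l<N. (A ^\<^sub>m k) $$ (i, l) * A $$ (l, j))"
    using A Suc.prems by (simp add: scalar_prod_def atLeast0LessThan)
  also have "\<dots> = (\<Sum>l<N. pw M N k i l * M l j)"
    using Suc M by (intro sum.cong refl) auto
  also have "\<dots> = pw M N (Suc k) i j" by (rule pw_right[symmetric]) (use Suc.prems in auto)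
  finally show ?case .
qed

lemma pw_smult: "pw (\<lambda>i j. c * M i j) N k i j = c ^ k * pw M N k i j"
  by (induction k arbitrary: i) (auto simp: sum_distrib_left ac_simps)

lemma pw_bound:
  assumes "\<And>i j. \<bar>M i j\<bar> \<le> B"
  shows "\<bar>pw M N k i j\<bar> \<le> (real N * B) ^ k"
proof (induction k arbitrary: i)
  case 0 then show ?case by simp
next
  case (Suc k)
  have B0: "0 \<le> B" using assms[of 0 0] by simp
  have "\<bar>pw M N (Suc k) i j\<bar> \<le> (\<Sum>l<N. \<bar>M i l\<bar> * \<bar>pw M N k l j\<bar>)"
    by (simp add: abs_mult[symmetric] sum_abs)
  also have "\<dots> \<le> (\<Sum>l<N. B * (real N * B) ^ k)"
    by (intro sum_mono mult_mono assms Suc.IH) (auto simp: B0)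
  also have "\<dots> = (real N * B) ^ Suc k" by simp
  finally show ?case .
qed

lemma Af_bound: "\<bar>Af n L i j\<bar> \<le> real (2 * L)"
proof -
  have fin: "{p. p + 1 < 2 * L} \<subseteq> {..<2*L}" by auto
  have "\<bar>Af n L i j\<bar> \<le> (\<Sum>p | p + 1 < 2 * L. \<bar>ee n L p i j\<bar>)" unfolding Af_def by (rule sum_abs)
  also have "\<dots> \<le> (\<Sum>p | p + 1 < 2 * L. 1)"
  proof (rule sum_mono)
    fix p
    have "\<bar>sg n L x\<bar> = 1" for x unfolding sg_def by (simp add: abs_prod)
    then show "\<bar>ee n L p i j\<bar> \<le> 1" unfolding ee_def by (simp add: abs_mult)
  qed
  also have "\<dots> = real (card {p. p + 1 < 2 * L})" by simp
  also have "\<dots> \<le> real (2 * L)" using card_mono[OF _ fin] by simp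
  finally show ?thesis .
qed


lemma sum_suminf_left:
  fixes f :: "'a \<Rightarrow> nat \<Rightarrow> real"
  assumes "finite I" "\<And>i. i \<in> I \<Longrightarrow> summable (f i)"
  shows "(\<Sum>i\<in>I. c i * suminf (f i)) = suminf (\<lambda>k. \<Sum>i\<in>I. c i * f i k)"
    "summable (\<lambda>k. \<Sum>i\<in>I. c i * f i k)"
proof -
  have s: "\<And>i. i \<in> I \<Longrightarrow> summable (\<lambda>k. c i * f i k)" using assms(2) by (rule summable_mult)
  show "(\<Sum>i\<in>I. c i * suminf (f i)) = suminf (\<lambda>k. \<Sum>i\<in>I. c i * f i k)"
    using assms(2) s by (simp add: suminf_mult[symmetric] suminf_sum)
  show "summable (\<lambda>k. \<Sum>i\<in>I. c i * f i k)" using s by (rule summable_sum)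
qed

context
  fixes n L :: nat and \<beta> :: real
begin

definition "NN = hdim n L"
definition "Ab = (- \<beta>) \<cdot>\<^sub>m H_AF n L"
definition "PP k i j = pw (Af n L) (hdim n L) k i j"
definition "aa i j k = \<beta> ^ k * PP k i j / fact k"
definition "trk k = (\<Sum>x<hdim n L. PP k x x)"
definition "numk k = (\<Sum>x<hdim n L. \<Sum>y<hdim n L. Dv n L x * PP k x y * Dv n L y)"

lemma Ab_carrier: "Ab \<in> carrier_mat (hdim n L) (hdim n L)"
  unfolding Ab_def using dims(1) by simp

lemma Ab_entry: "i < hdim n L \<Longrightarrow> j < hdim n L \<Longrightarrow> Ab $$ (i, j) = \<beta> * Af n L i j"
  unfolding Ab_def using dims(1)[of n L] by (simp add: H_AF_entry)

lemma Ab_pow: "i < hdim n L \<Longrightarrow> j < hdim n L \<Longrightarrow> (Ab ^\<^sub>m k) $$ (i, j) = \<beta> ^ k * PP k i j"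
  unfolding PP_def using pow_pw[OF Ab_carrier Ab_entry] pw_smult by simp

lemma exp_entry: "i < hdim n L \<Longrightarrow> j < hdim n L \<Longrightarrow> mat_exp Ab $$ (i, j) = suminf (aa i j)"
  unfolding mat_exp_def aa_def using Ab_carrier by (simp add: Ab_pow)

lemma aa_summable: "summable (aa i j)"
proof (rule summable_comparison_test)
  let ?c = "\<bar>\<beta>\<bar> * (real (hdim n L) * real (2 * L))"
  show "summable (\<lambda>k. inverse (fact k) * ?c ^ k)" by (rule summable_exp)
  show "\<exists>N. \<forall>k\<ge>N. norm (aa i j k) \<le> inverse (fact k) * ?c ^ k"
  proof (intro exI allI impI)
    fix k
    have "\<bar>PP k i j\<bar> \<le> (real (hdim n L) * real (2 * L)) ^ k"
      unfolding PP_def by (rule pw_bound) (rule Af_bound)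
    then have "\<bar>\<beta> ^ k * PP k i j\<bar> \<le> \<bar>\<beta>\<bar> ^ k * (real (hdim n L) * real (2 * L)) ^ k"
      by (simp add: abs_mult power_abs mult_left_mono)
    then show "norm (aa i j k) \<le> inverse (fact k) * ?c ^ k"
      unfolding aa_def by (simp add: power_mult_distrib divide_simps abs_mult field_simps)
  qed
qed

lemma num_series: "D_vec n L \<bullet> (mat_exp Ab *\<^sub>v D_vec n L) = (\<Sum>k. \<beta> ^ k / fact k * numk k)"
  "summable (\<lambda>k. \<beta> ^ k / fact k * numk k)"
proof -
  let ?N = "hdim n L"
  have dimE: "dim_row (mat_exp Ab) = ?N" "dim_col (mat_exp Ab) = ?N"
    unfolding mat_exp_def using Ab_carrier by auto
  have inner: "(\<Sum>j<?N. Dv n L j * suminf (aa i j)) = suminf (\<lambda>k. \<Sum>j<?N. Dv n L j * aa i j k)"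
    "summable (\<lambda>k. \<Sum>j<?N. Dv n L j * aa i j k)" for i
    using sum_suminf_left[of "{..<?N}" "aa i" "Dv n L"] aa_summable by auto
  have "D_vec n L \<bullet> (mat_exp Ab *\<^sub>v D_vec n L) = (\<Sum>i<?N. Dv n L i * (\<Sum>j<?N. Dv n L j * suminf (aa i j)))"
  proof -
    have rowE: "(mat_exp Ab *\<^sub>v D_vec n L) $ i = (\<Sum>j<?N. Dv n L j * suminf (aa i j))" if "i < ?N" for i
      using dimE that by (auto simp: scalar_prod_def atLeast0LessThan dims(2) D_vec_entry exp_entry mult.commute intro!: sum.cong)
    show ?thesis
      unfolding scalar_prod_def using dimE rowE by (auto simp: atLeast0LessThan D_vec_entry intro!: sum.cong)
  qed
  also have "\<dots> = (\<Sum>i<?N. Dv n L i * suminf (\<lambda>k. \<Sum>j<?N. Dv n L j * aa i j k))"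
    using inner by simp
  also have "\<dots> = suminf (\<lambda>k. \<Sum>i<?N. Dv n L i * (\<Sum>j<?N. Dv n L j * aa i j k))"
    using sum_suminf_left[of "{..<?N}" "\<lambda>i k. \<Sum>j<?N. Dv n L j * aa i j k" "Dv n L"] inner by auto
  also have "(\<lambda>k. \<Sum>i<?N. Dv n L i * (\<Sum>j<?N. Dv n L j * aa i j k)) = (\<lambda>k. \<beta> ^ k / fact k * numk k)"
    unfolding numk_def aa_def by (auto simp: sum_distrib_left ac_simps intro!: sum.cong)
  finally show "D_vec n L \<bullet> (mat_exp Ab *\<^sub>v D_vec n L) = (\<Sum>k. \<beta> ^ k / fact k * numk k)" .
  have "summable (\<lambda>k. \<Sum>i<?N. Dv n L i * (\<Sum>j<?N. Dv n L j * aa i j k))"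
    using sum_suminf_left[of "{..<?N}" "\<lambda>i k. \<Sum>j<?N. Dv n L j * aa i j k" "Dv n L"] inner by auto
  also have "(\<lambda>k. \<Sum>i<?N. Dv n L i * (\<Sum>j<?N. Dv n L j * aa i j k)) = (\<lambda>k. \<beta> ^ k / fact k * numk k)"
    unfolding numk_def aa_def by (auto simp: sum_distrib_left ac_simps intro!: sum.cong)
  finally show "summable (\<lambda>k. \<beta> ^ k / fact k * numk k)" .
qed

lemma tr_series: "mat_trace (mat_exp Ab) = (\<Sum>k. \<beta> ^ k / fact k * trk k)"
  "summable (\<lambda>k. \<beta> ^ k / fact k * trk k)"
proof -
  let ?N = "hdim n L"
  have dimE: "dim_row (mat_exp Ab) = ?N"
    unfolding mat_exp_def using Ab_carrier by auto
  have s: "(\<Sum>i<?N. 1 * suminf (aa i i)) = suminf (\<lambda>k. \<Sum>i<?N. 1 * aa i i k)"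
    "summable (\<lambda>k. \<Sum>i<?N. 1 * aa i i k)"
    using sum_suminf_left[of "{..<?N}" "\<lambda>i. aa i i" "\<lambda>_. 1"] aa_summable by auto
  have e: "(\<lambda>k. \<Sum>i<?N. 1 * aa i i k) = (\<lambda>k. \<beta> ^ k / fact k * trk k)"
    unfolding trk_def aa_def by (auto simp: sum_distrib_left intro!: sum.cong)
  show "mat_trace (mat_exp Ab) = (\<Sum>k. \<beta> ^ k / fact k * trk k)"
    unfolding mat_trace_def dimE using s(1) e by (simp add: exp_entry)
  show "summable (\<lambda>k. \<beta> ^ k / fact k * trk k)" using s(2) e by simp
qed

lemma key_k: "real ((n+1)^L) * numk k \<ge> trk k \<and> trk k \<ge> 0"
  using key_fun[of n L k] unfolding numk_def trk_def PP_def hdim_eq by simp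

lemma trk0: "trk 0 = real (hdim n L)"
  unfolding trk_def PP_def by simp

lemma part1:
  assumes "\<beta> > 0"
  shows "D_vec n L \<bullet> (mat_exp Ab *\<^sub>v D_vec n L) / mat_trace (mat_exp Ab) \<ge> 1 / real (n + 1) ^ L"
proof -
  let ?c = "\<lambda>k. \<beta> ^ k / fact k"
  have c0: "?c k \<ge> 0" for k using assms by simp
  have "mat_trace (mat_exp Ab) \<le> (\<Sum>k. real ((n+1)^L) * (?c k * numk k))"
    unfolding tr_series(1)
  proof (rule suminf_le)
    show "?c k * trk k \<le> real ((n+1)^L) * (?c k * numk k)" for k
    proof -
      have "?c k * trk k \<le> ?c k * (real ((n+1)^L) * numk k)" by (rule mult_left_mono) (use key_k c0 in auto)
      then show ?thesis by (metis mult.left_commute)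
    qed
    show "summable (\<lambda>k. ?c k * trk k)" by (rule tr_series(2))
    show "summable (\<lambda>k. real ((n+1)^L) * (?c k * numk k))" by (rule summable_mult[OF num_series(2)])
  qed
  also have "\<dots> = real ((n+1)^L) * (D_vec n L \<bullet> (mat_exp Ab *\<^sub>v D_vec n L))"
    unfolding num_series(1) by (rule suminf_mult[OF num_series(2)])
  finally have le: "mat_trace (mat_exp Ab) \<le> real ((n+1)^L) * (D_vec n L \<bullet> (mat_exp Ab *\<^sub>v D_vec n L))" .
  have "?c 0 * trk 0 \<le> mat_trace (mat_exp Ab)"
    unfolding tr_series(1)
  proof -
    have "sum (\<lambda>k. ?c k * trk k) {0} \<le> (\<Sum>k. ?c k * trk k)"
      by (rule sum_le_suminf[OF tr_series(2)], simp, rule mult_nonneg_nonneg[OF c0 conjunct2[OF key_k]])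
    then show "?c 0 * trk 0 \<le> (\<Sum>k. ?c k * trk k)" by simp
  qed
  then have t: "real (hdim n L) \<le> mat_trace (mat_exp Ab)" unfolding trk0 by simp
  have "real (hdim n L) > 0" unfolding hdim_def by simp
  with t have pos: "mat_trace (mat_exp Ab) > 0" by linarith
  show ?thesis using le pos by (simp add: divide_simps mult.commute)
qed

end


definition ipf :: "nat \<Rightarrow> (nat \<Rightarrow> real) \<Rightarrow> (nat \<Rightarrow> real) \<Rightarrow> real" where
  "ipf N x y = (\<Sum>i<N. x i * y i)"
definition mvf :: "nat \<Rightarrow> (nat \<Rightarrow> nat \<Rightarrow> real) \<Rightarrow> (nat \<Rightarrow> real) \<Rightarrow> nat \<Rightarrow> real" where
  "mvf N M x = (\<lambda>i. if i < N then (\<Sum>j<N. M i j * x j) else 0)"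
definition rqf :: "nat \<Rightarrow> (nat \<Rightarrow> nat \<Rightarrow> real) \<Rightarrow> (nat \<Rightarrow> real) \<Rightarrow> real" where
  "rqf N M x = ipf N x (mvf N M x)"
definition ZZ :: "nat \<Rightarrow> (nat \<Rightarrow> real) set" where
  "ZZ N = {x. \<forall>i\<ge>N. x i = 0}"

lemma ipf_sym: "ipf N x y = ipf N y x" unfolding ipf_def by (simp add: mult.commute)
lemma ipf_add_left: "ipf N (\<lambda>i. x i + c * y i) z = ipf N x z + c * ipf N y z"
  unfolding ipf_def by (simp add: algebra_simps sum.distrib sum_distrib_left)
lemma ipf_add_right: "ipf N z (\<lambda>i. x i + c * y i) = ipf N z x + c * ipf N z y"
  unfolding ipf_def by (simp add: algebra_simps sum.distrib sum_distrib_left)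
lemma ipf_scale_left: "ipf N (\<lambda>i. c * x i) z = c * ipf N x z"
  unfolding ipf_def by (simp add: algebra_simps sum_distrib_left)
lemma ipf_scale_right: "ipf N z (\<lambda>i. c * x i) = c * ipf N z x"
  unfolding ipf_def by (simp add: algebra_simps sum_distrib_left)
lemma ipf_nonneg: "ipf N x x \<ge> 0" unfolding ipf_def by (auto intro: sum_nonneg)
lemma ipf_zero: "ipf N x x = 0 \<Longrightarrow> i < N \<Longrightarrow> x i = 0"
  unfolding ipf_def using sum_nonneg_eq_0_iff[of "{..<N}" "\<lambda>i. x i * x i"] by auto
lemma ipf_zero_ZZ: "ipf N x x = 0 \<Longrightarrow> x \<in> ZZ N \<Longrightarrow> x = (\<lambda>_. 0)"
proof
  fix i assume "ipf N x x = 0" "x \<in> ZZ N"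
  then show "x i = 0" using ipf_zero[of N x i] unfolding ZZ_def by (cases "i < N") auto
qed
lemma ipf_0: "ipf N (\<lambda>_. 0) y = 0" unfolding ipf_def by simp

lemma mvf_ZZ: "mvf N M x \<in> ZZ N" unfolding mvf_def ZZ_def by auto
lemma mvf_add: "mvf N M (\<lambda>i. x i + c * y i) = (\<lambda>i. mvf N M x i + c * mvf N M y i)"
  unfolding mvf_def by (auto simp: algebra_simps sum.distrib sum_distrib_left)
lemma mvf_scale: "mvf N M (\<lambda>i. c * x i) = (\<lambda>i. c * mvf N M x i)"
  unfolding mvf_def by (auto simp: algebra_simps sum_distrib_left)

definition "symm M \<longleftrightarrow> (\<forall>i j. M i j = M j i)"

lemma mvf_adj: assumes "symm M" shows "ipf N x (mvf N M y) = ipf N (mvf N M x) y"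
proof -
  have "ipf N x (mvf N M y) = (\<Sum>i<N. \<Sum>j<N. x i * M i j * y j)"
    unfolding ipf_def mvf_def by (intro sum.cong refl) (simp add: sum_distrib_left mult.assoc)
  also have "\<dots> = (\<Sum>j<N. \<Sum>i<N. x i * M i j * y j)" by (rule sum.swap)
  also have "\<dots> = ipf N (mvf N M x) y"
    unfolding ipf_def mvf_def using assms unfolding symm_def
    by (intro sum.cong refl) (auto simp: sum_distrib_right sum_distrib_left ac_simps intro!: sum.cong)
  finally show ?thesis .
qed

lemma rqf_alt: "rqf N M x = (\<Sum>i<N. \<Sum>j<N. x i * M i j * x j)"
  unfolding rqf_def ipf_def mvf_def by (intro sum.cong refl) (simp add: sum_distrib_left mult.assoc)

lemma cont_coord: "continuous_on UNIV (\<lambda>x::nat \<Rightarrow> real. x i)" by simp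

lemma cont_rqf: "continuous_on UNIV (rqf N M)"
  unfolding rqf_alt by (intro continuous_intros cont_coord)

lemma cont_ipf: "continuous_on UNIV (\<lambda>x. ipf N x x)"
  unfolding ipf_def by (intro continuous_intros cont_coord)

lemma cont_ipf2: "continuous_on UNIV (\<lambda>x. ipf N x g)"
  unfolding ipf_def by (intro continuous_intros cont_coord)

lemma closed_ZZ: "closed (ZZ N)"
proof -
  have "ZZ N = (\<Inter>i\<in>{N..}. {x. x i = 0})" unfolding ZZ_def by auto
  moreover have "closed {x::nat\<Rightarrow>real. x i = 0}" for i
    by (rule closed_Collect_eq) (auto intro: cont_coord)
  ultimately show ?thesis by auto
qed

lemma compact_box: "compact (Pi\<^sub>E UNIV (\<lambda>i. if i < N then {-1..1::real} else {0}))"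
proof -
  have "compactin (product_topology (\<lambda>i. euclidean) UNIV) (Pi\<^sub>E UNIV (\<lambda>i. if i < N then {-1..1::real} else {0}))"
    by (subst compactin_PiE) auto
  then show ?thesis by (simp add: euclidean_product_topology)
qed

lemma maximizer:
  fixes f :: "(nat \<Rightarrow> real) \<Rightarrow> real"
  assumes W: "closed W" "W \<subseteq> ZZ N" and ex: "\<exists>x\<in>W. ipf N x x = 1" and f: "continuous_on UNIV f"
  shows "\<exists>w\<in>W. ipf N w w = 1 \<and> (\<forall>x\<in>W. ipf N x x = 1 \<longrightarrow> f x \<le> f w)"
proof -
  let ?K = "Pi\<^sub>E UNIV (\<lambda>i. if i < N then {-1..1::real} else {0})"
  let ?S = "W \<inter> {x. ipf N x x = 1}"
  have sub: "?S \<subseteq> ?K"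
  proof
    fix x assume x: "x \<in> ?S"
    have "x i \<in> (if i < N then {-1..1} else {0})" for i
    proof (cases "i < N")
      case True
      have "x i * x i \<le> (\<Sum>j<N. x j * x j)"
        by (rule member_le_sum[of i "{..<N}" "\<lambda>j. x j * x j"]) (use True in auto)
      then have "x i * x i \<le> 1" using x unfolding ipf_def by auto
      then have "\<bar>x i\<bar> \<le> 1" using abs_square_le_1[of "x i"] by (simp add: power2_eq_square)
      then show ?thesis using True by auto
    next
      case False then show ?thesis using x W unfolding ZZ_def by auto
    qed
    then show "x \<in> ?K" by auto
  qed
  have cl: "closed ?S"
    by (intro closed_Int W(1) closed_Collect_eq cont_ipf) auto
  have "compact (?K \<inter> ?S)" by (rule compact_Int_closed[OF compact_box cl])
  then have cS: "compact ?S" using sub by (simp add: Int_absorb1)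
  have ne: "?S \<noteq> {}" using ex by auto
  obtain w where "w \<in> ?S" "\<forall>y\<in>?S. f y \<le> f w"
    using continuous_attains_sup[OF cS ne continuous_on_subset[OF f subset_UNIV]] by auto
  then show ?thesis by auto
qed


lemma quad_zero:
  fixes a b :: real
  assumes h: "\<And>t. 2 * t * a + t^2 * b \<le> 0"
  shows "a = 0"
proof -
  define c where "c = \<bar>b\<bar> + 1"
  have c: "c > 0" unfolding c_def by simp
  define t where "t = a / c"
  have tc: "t * c = a" unfolding t_def using c by simp
  have "c^2 * (2 * t * a + t^2 * b) \<le> 0" using h[of t] by (simp add: mult_nonneg_nonpos)
  also have "c^2 * (2 * t * a + t^2 * b) = a^2 * (2 * c + b)"
    using tc by (auto simp: power2_eq_square algebra_simps)
  finally have le: "a^2 * (2 * c + b) \<le> 0" .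
  have "2 * c + b > 0" unfolding c_def by (cases "b < 0") auto
  with le have "a^2 \<le> 0" by (simp add: mult_le_0_iff)
  then show ?thesis by simp
qed

definition "subsp W \<longleftrightarrow> (\<forall>x\<in>W. \<forall>y\<in>W. \<forall>c. (\<lambda>i. x i + c * y i) \<in> W) \<and> (\<forall>x\<in>W. \<forall>c. (\<lambda>i. c * x i) \<in> W)"

lemma rqf_scale: "rqf N M (\<lambda>i. c * x i) = c^2 * rqf N M x"
  unfolding rqf_def mvf_scale ipf_scale_left ipf_scale_right by (simp add: power2_eq_square)
lemma ipf_scale2: "ipf N (\<lambda>i. c * x i) (\<lambda>i. c * x i) = c^2 * ipf N x x"
  unfolding ipf_scale_left ipf_scale_right by (simp add: power2_eq_square)

lemma rqf_zero: "ipf N x x = 0 \<Longrightarrow> rqf N M x = 0"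
  unfolding rqf_alt using ipf_zero[of N x] by simp

lemma variational:
  assumes sy: "symm M" and W: "closed W" "W \<subseteq> ZZ N" "subsp W" and inv: "\<forall>x\<in>W. mvf N M x \<in> W"
    and ex: "\<exists>x\<in>W. ipf N x x = 1"
  shows "\<exists>w\<in>W. ipf N w w = 1 \<and> mvf N M w = (\<lambda>i. rqf N M w * w i) \<and> (\<forall>x\<in>W. rqf N M x \<le> rqf N M w * ipf N x x)"
proof -
  obtain w where w: "w \<in> W" "ipf N w w = 1" and wmax: "\<forall>x\<in>W. ipf N x x = 1 \<longrightarrow> rqf N M x \<le> rqf N M w"
    using maximizer[OF W(1,2) ex cont_rqf] by blast
  let ?l = "rqf N M w"
  have all: "rqf N M x \<le> ?l * ipf N x x" if x: "x \<in> W" for x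
  proof (cases "ipf N x x = 0")
    case True then show ?thesis using rqf_zero by simp
  next
    case False
    then have pos: "ipf N x x > 0" using ipf_nonneg[of N x] by simp
    define s where "s = 1 / sqrt (ipf N x x)"
    have s2: "s^2 * ipf N x x = 1" unfolding s_def using pos by (simp add: power_divide)
    have yW: "(\<lambda>i. s * x i) \<in> W" using W(3) x unfolding subsp_def by auto
    have "ipf N (\<lambda>i. s * x i) (\<lambda>i. s * x i) = 1" using s2 by (simp add: ipf_scale2)
    then have "rqf N M (\<lambda>i. s * x i) \<le> ?l" using wmax yW by blast
    then have "s^2 * rqf N M x \<le> ?l" by (simp add: rqf_scale)
    then have "s^2 * rqf N M x * ipf N x x \<le> ?l * ipf N x x" using pos by (simp add: mult_right_mono)
    moreover have "s^2 * rqf N M x * ipf N x x = rqf N M x * (s^2 * ipf N x x)" by (simp only: mult_ac)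
    ultimately show ?thesis using s2 by simp
  qed
  have deriv: "ipf N y (mvf N M w) - ?l * ipf N y w = 0" if y: "y \<in> W" for y
  proof (rule quad_zero)
    fix t
    let ?z = "\<lambda>i. w i + t * y i"
    have zW: "?z \<in> W" using W(3) w y unfolding subsp_def by auto
    have adj: "ipf N w (mvf N M y) = ipf N y (mvf N M w)"
      using mvf_adj[OF sy, of N w y] ipf_sym by simp
    have r: "rqf N M ?z = ?l + 2 * t * ipf N y (mvf N M w) + t^2 * rqf N M y"
      unfolding rqf_def mvf_add ipf_add_left ipf_add_right using adj
      by (simp add: power2_eq_square algebra_simps)
    have i: "ipf N ?z ?z = 1 + 2 * t * ipf N y w + t^2 * ipf N y y"
      unfolding ipf_add_left ipf_add_right using w(2) ipf_sym[of N w y]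
      by (simp add: power2_eq_square algebra_simps)
    have "rqf N M ?z \<le> ?l * ipf N ?z ?z" using all[OF zW] .
    then show "2 * t * (ipf N y (mvf N M w) - ?l * ipf N y w) + t^2 * (rqf N M y - ?l * ipf N y y) \<le> 0"
      unfolding r i by (simp add: algebra_simps)
  qed
  let ?y = "\<lambda>i. mvf N M w i + (- ?l) * w i"
  have mW: "mvf N M w \<in> W" using inv w by auto
  have s1: "\<forall>x\<in>W. \<forall>y\<in>W. \<forall>c. (\<lambda>i. x i + c * y i) \<in> W" using W(3) unfolding subsp_def by blast
  have yW: "?y \<in> W" using s1[rule_format, OF mW w(1), of "- ?l"] .
  have "ipf N ?y ?y = ipf N ?y (mvf N M w) - ?l * ipf N ?y w"
    unfolding ipf_add_right by simp
  then have "ipf N ?y ?y = 0" using deriv[OF yW] by simp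
  then have "?y = (\<lambda>_. 0)" using ipf_zero_ZZ yW W(2) by blast
  then have "mvf N M w = (\<lambda>i. ?l * w i)"
  proof -
    assume y0: "?y = (\<lambda>_. 0)"
    show ?thesis
    proof
      fix i
      have "mvf N M w i + (- ?l) * w i = 0" using fun_cong[OF y0, of i] by simp
      then show "mvf N M w i = ?l * w i" by simp
    qed
  qed
  then show ?thesis using w all by blast
qed


lemma subsp_ZZ: "subsp (ZZ N)" unfolding subsp_def ZZ_def by auto

lemma it_ZZ: "x \<in> ZZ N \<Longrightarrow> (mvf N M ^^ k) x \<in> ZZ N"
  by (induction k) (auto simp: mvf_ZZ)

lemma pw_mvf: "i < N \<Longrightarrow> x \<in> ZZ N \<Longrightarrow> (\<Sum>j<N. pw M N k i j * x j) = (mvf N M ^^ k) x i"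
proof (induction k arbitrary: i)
  case 0
  have "(\<Sum>j<N. (if i = j then 1 else 0) * x j) = (\<Sum>j<N. if j = i then x j else 0)"
    by (intro sum.cong) auto
  also have "\<dots> = x i" using 0 by simp
  finally show ?case by simp
next
  case (Suc k)
  have "(\<Sum>j<N. pw M N (Suc k) i j * x j) = (\<Sum>j<N. \<Sum>l<N. M i l * pw M N k l j * x j)"
    by (simp add: sum_distrib_right mult.assoc)
  also have "\<dots> = (\<Sum>l<N. \<Sum>j<N. M i l * pw M N k l j * x j)" by (rule sum.swap)
  also have "\<dots> = (\<Sum>l<N. M i l * (mvf N M ^^ k) x l)"
  proof (intro sum.cong refl)
    fix l assume "l \<in> {..<N}"
    then have "(\<Sum>j<N. pw M N k l j * x j) = (mvf N M ^^ k) x l" using Suc.IH Suc.prems by auto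
    then show "(\<Sum>j<N. M i l * pw M N k l j * x j) = M i l * (mvf N M ^^ k) x l"
      by (simp add: sum_distrib_left[symmetric] mult.assoc)
  qed
  also have "\<dots> = (mvf N M ^^ Suc k) x i" using Suc.prems by (simp add: mvf_def)
  finally show ?case .
qed

lemma pw_add: "i < N \<Longrightarrow> j < N \<Longrightarrow> pw M N (a + b) i j = (\<Sum>l<N. pw M N a i l * pw M N b l j)"
proof (induction a arbitrary: i)
  case 0
  have "(\<Sum>l<N. (if i = l then 1 else 0) * pw M N b l j) = (\<Sum>l<N. if l = i then pw M N b l j else 0)"
    by (intro sum.cong) auto
  also have "\<dots> = pw M N b i j" using 0 by simp
  finally show ?case by simp
next
  case (Suc a)
  have "pw M N (Suc a + b) i j = (\<Sum>m<N. M i m * (\<Sum>l<N. pw M N a m l * pw M N b l j))"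
    using Suc by simp
  also have "\<dots> = (\<Sum>m<N. \<Sum>l<N. M i m * pw M N a m l * pw M N b l j)"
    by (simp add: sum_distrib_left mult.assoc)
  also have "\<dots> = (\<Sum>l<N. \<Sum>m<N. M i m * pw M N a m l * pw M N b l j)" by (rule sum.swap)
  also have "\<dots> = (\<Sum>l<N. pw M N (Suc a) i l * pw M N b l j)"
    by (simp add: sum_distrib_right)
  finally show ?case .
qed

lemma pw_sym: "symm M \<Longrightarrow> i < N \<Longrightarrow> j < N \<Longrightarrow> pw M N k i j = pw M N k j i"
proof (induction k arbitrary: i j)
  case 0 then show ?case by simp
next
  case (Suc k)
  have "pw M N (Suc k) j i = (\<Sum>l<N. pw M N k j l * M l i)" using pw_right Suc.prems by blast
  also have "\<dots> = (\<Sum>l<N. M i l * pw M N k l j)"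
    using Suc unfolding symm_def by (intro sum.cong refl) (auto simp: mult.commute)
  finally show ?case by simp
qed

lemma adj_pow: "symm M \<Longrightarrow> ipf N ((mvf N M ^^ a) x) ((mvf N M ^^ b) y) = ipf N x ((mvf N M ^^ (a + b)) y)"
proof (induction a arbitrary: b)
  case 0 then show ?case by simp
next
  case (Suc a)
  have "ipf N ((mvf N M ^^ Suc a) x) ((mvf N M ^^ b) y) = ipf N ((mvf N M ^^ a) x) ((mvf N M ^^ Suc b) y)"
    using mvf_adj[OF Suc.prems, of N "(mvf N M ^^ a) x" "(mvf N M ^^ b) y"] by simp
  also have "\<dots> = ipf N x ((mvf N M ^^ (a + Suc b)) y)" using Suc.IH[of "Suc b"] Suc.prems by (simp only:)
  finally show ?case by simp
qed

lemma it_eig: "mvf N M w = (\<lambda>i. l * w i) \<Longrightarrow> (mvf N M ^^ k) w = (\<lambda>i. l ^ k * w i)"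
  by (induction k) (auto simp: mvf_scale)

lemma trace_bound:
  assumes sy: "symm M" and w: "w \<in> ZZ N" "ipf N w w = 1" "mvf N M w = (\<lambda>i. l * w i)"
  shows "(\<Sum>i<N. pw M N (k + k) i i) \<ge> l ^ (2 * k)"
proof -
  have "(\<Sum>i<N. pw M N (k + k) i i) = (\<Sum>i<N. \<Sum>j<N. (pw M N k i j)^2)"
  proof (intro sum.cong refl)
    fix i assume i: "i \<in> {..<N}"
    have "pw M N (k + k) i i = (\<Sum>l<N. pw M N k i l * pw M N k l i)" using pw_add i by blast
    also have "\<dots> = (\<Sum>j<N. (pw M N k i j)^2)"
      using pw_sym[OF sy] i by (intro sum.cong refl) (auto simp: power2_eq_square)
    finally show "pw M N (k + k) i i = (\<Sum>j<N. (pw M N k i j)^2)" .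
  qed
  also have "\<dots> \<ge> (\<Sum>i<N. ((mvf N M ^^ k) w i)^2)"
  proof (rule sum_mono)
    fix i assume i: "i \<in> {..<N}"
    have "((mvf N M ^^ k) w i)^2 = (\<Sum>j<N. pw M N k i j * w j)^2" using pw_mvf[of i N w M k] i w by simp
    also have "\<dots> \<le> (\<Sum>j<N. (pw M N k i j)^2) * (\<Sum>j<N. (w j)^2)" by (rule Cauchy_Schwarz_ineq_sum)
    also have "(\<Sum>j<N. (w j)^2) = 1" using w(2) unfolding ipf_def by (simp add: power2_eq_square)
    finally show "((mvf N M ^^ k) w i)^2 \<le> (\<Sum>j<N. (pw M N k i j)^2)" by simp
  qed
  also have "(\<Sum>i<N. ((mvf N M ^^ k) w i)^2) = l ^ (2 * k)"
  proof -
    have e: "l ^ (2 * k) = l^k * l^k" by (metis mult_2 power_add)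
    have "(\<Sum>i<N. ((mvf N M ^^ k) w i)^2) = (\<Sum>i<N. l ^ (2 * k) * (w i * w i))"
      unfolding it_eig[OF w(3)] e by (intro sum.cong refl) (simp add: power2_eq_square algebra_simps)
    also have "\<dots> = l ^ (2 * k)" using w(2) unfolding ipf_def by (simp add: sum_distrib_left[symmetric])
    finally show ?thesis .
  qed
  finally show ?thesis .
qed


lemma rqf_eig: "mvf N M v = (\<lambda>i. m * v i) \<Longrightarrow> rqf N M v = m * ipf N v v"
  unfolding rqf_def by (simp add: ipf_scale_right)

definition "sq2 N (A::nat \<Rightarrow> nat \<Rightarrow> real) = (\<lambda>i j. \<Sum>l<N. A i l * A l j)"

lemma sq2_symm: assumes "symm A" shows "symm (sq2 N A)"
  unfolding symm_def sq2_def
proof (intro allI)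
  fix i j
  have "A i l * A l j = A j l * A l i" for l
  proof -
    have e1: "A l j = A j l" "A i l = A l i" using assms unfolding symm_def by blast+
    show ?thesis by (simp add: e1 mult.commute)
  qed
  then show "(\<Sum>l<N. A i l * A l j) = (\<Sum>l<N. A j l * A l i)" by simp
qed

lemma mvf_sq2: "mvf N (sq2 N A) x = mvf N A (mvf N A x)"
proof
  fix i
  show "mvf N (sq2 N A) x i = mvf N A (mvf N A x) i"
  proof (cases "i < N")
    case True
    have "mvf N (sq2 N A) x i = (\<Sum>j<N. \<Sum>l<N. A i l * A l j * x j)"
      using True unfolding mvf_def sq2_def by (simp add: sum_distrib_right)
    also have "\<dots> = (\<Sum>l<N. \<Sum>j<N. A i l * A l j * x j)" by (rule sum.swap)
    also have "\<dots> = mvf N A (mvf N A x) i"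
      using True unfolding mvf_def by (auto simp: sum_distrib_left mult.assoc intro!: sum.cong)
    finally show ?thesis .
  qed (simp add: mvf_def)
qed

theorem spectral_main:
  fixes N :: nat and A :: "nat \<Rightarrow> nat \<Rightarrow> real" and D :: "nat \<Rightarrow> real" and C :: real
  assumes sy: "symm A" and psd: "\<And>x. rqf N A x \<ge> 0" and DZ: "D \<in> ZZ N" and C: "C > 0" and N: "N > 0"
    and word: "\<And>k. C * (\<Sum>i<N. \<Sum>j<N. D i * pw A N k i j * D j) \<ge> (\<Sum>i<N. pw A N k i i)"
  shows "\<exists>l. (\<exists>w\<in>ZZ N. ipf N w w \<noteq> 0 \<and> mvf N A w = (\<lambda>i. l * w i))
     \<and> (\<forall>m v. v \<in> ZZ N \<longrightarrow> ipf N v v \<noteq> 0 \<longrightarrow> mvf N A v = (\<lambda>i. m * v i) \<longrightarrow> m \<le> l)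
     \<and> (\<exists>v\<in>ZZ N. ipf N v v \<noteq> 0 \<and> mvf N A v = (\<lambda>i. l * v i) \<and> ipf N v D \<noteq> 0)"
proof -
  have ex0: "\<exists>x\<in>ZZ N. ipf N x x = 1"
  proof
    show "(\<lambda>i. if i = 0 then 1 else 0) \<in> ZZ N" using N unfolding ZZ_def by auto
    show "ipf N (\<lambda>i. if i = 0 then 1 else (0::real)) (\<lambda>i. if i = 0 then 1 else 0) = 1"
      using N unfolding ipf_def by (simp add: if_distrib cong: if_cong)
  qed
  obtain w0 where w0: "w0 \<in> ZZ N" "ipf N w0 w0 = 1" "mvf N A w0 = (\<lambda>i. rqf N A w0 * w0 i)"
    and all0: "\<forall>x\<in>ZZ N. rqf N A x \<le> rqf N A w0 * ipf N x x"
    using variational[OF sy closed_ZZ order_refl subsp_ZZ _ ex0] mvf_ZZ by blast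
  define l where "l = rqf N A w0"
  have l0: "l \<ge> 0" unfolding l_def by (rule psd)
  have maxl: "m \<le> l" if v: "v \<in> ZZ N" "ipf N v v \<noteq> 0" "mvf N A v = (\<lambda>i. m * v i)" for m v
  proof -
    have "m * ipf N v v \<le> l * ipf N v v" using all0 v rqf_eig[OF v(3)] unfolding l_def by auto
    moreover have "ipf N v v > 0" using v(2) ipf_nonneg[of N v] by simp
    ultimately show ?thesis by simp
  qed
  have part3: "\<exists>v\<in>ZZ N. ipf N v v \<noteq> 0 \<and> mvf N A v = (\<lambda>i. l * v i) \<and> ipf N v D \<noteq> 0"
  proof (rule ccontr)
    assume nex: "\<not> ?thesis"
    define G where "G = {g \<in> ZZ N. mvf N A g = (\<lambda>i. l * g i)}"
    define W where "W = {x \<in> ZZ N. \<forall>g\<in>G. ipf N x g = 0}"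
    have DW: "D \<in> W"
      unfolding W_def
    proof (intro CollectI conjI DZ ballI)
      fix g assume g: "g \<in> G"
      show "ipf N D g = 0"
      proof (cases "ipf N g g = 0")
        case True then have "g = (\<lambda>_. 0)" using ipf_zero_ZZ g unfolding G_def by blast
        then show ?thesis unfolding ipf_def by simp
      next
        case False then show ?thesis using nex g ipf_sym[of N D g] unfolding G_def by auto
      qed
    qed
    have WZ: "W \<subseteq> ZZ N" unfolding W_def by auto
    have Wcl: "closed W"
    proof -
      have "W = ZZ N \<inter> (\<Inter>g\<in>G. {x. ipf N x g = 0})" unfolding W_def by auto
      moreover have "closed {x. ipf N x g = 0}" for g
        by (rule closed_Collect_eq) (auto intro: cont_ipf2)
      ultimately show ?thesis using closed_ZZ by auto
    qed
    have Wsub: "subsp W"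
      unfolding subsp_def
    proof (intro conjI ballI allI)
      fix x y c assume x: "x \<in> W" and y: "y \<in> W"
      show "(\<lambda>i. x i + c * y i) \<in> W"
        unfolding W_def
      proof (intro CollectI conjI ballI)
        show "(\<lambda>i. x i + c * y i) \<in> ZZ N" using x y unfolding W_def ZZ_def by simp
        fix g assume "g \<in> G"
        then show "ipf N (\<lambda>i. x i + c * y i) g = 0" using x y unfolding W_def ipf_add_left by simp
      qed
    next
      fix x c assume x: "x \<in> W"
      show "(\<lambda>i. c * x i) \<in> W"
        unfolding W_def
      proof (intro CollectI conjI ballI)
        show "(\<lambda>i. c * x i) \<in> ZZ N" using x unfolding W_def ZZ_def by simp
        fix g assume "g \<in> G"
        then show "ipf N (\<lambda>i. c * x i) g = 0" using x unfolding W_def ipf_scale_left by simp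
      qed
    qed
    have Winv: "mvf N A x \<in> W" if x: "x \<in> W" for x
      unfolding W_def
    proof (intro CollectI conjI mvf_ZZ ballI)
      fix g assume g: "g \<in> G"
      have "ipf N (mvf N A x) g = ipf N x (mvf N A g)" using mvf_adj[OF sy] by simp
      also have "\<dots> = l * ipf N x g" using g unfolding G_def by (simp add: ipf_scale_right)
      also have "\<dots> = 0" using x g unfolding W_def by simp
      finally show "ipf N (mvf N A x) g = 0" .
    qed
    have Winv2: "\<forall>x\<in>W. mvf N (sq2 N A) x \<in> W" using Winv by (simp add: mvf_sq2)
    have "C * ipf N D D \<ge> real N"
    proof -
      have "(\<Sum>i<N. \<Sum>j<N. D i * pw A N 0 i j * D j) = ipf N D D"
      proof -
        have "(\<Sum>i<N. \<Sum>j<N. D i * pw A N 0 i j * D j) = (\<Sum>i<N. \<Sum>j<N. if j = i then D i * D j else 0)"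
          by (intro sum.cong refl) auto
        then show ?thesis unfolding ipf_def by simp
      qed
      moreover have "(\<Sum>i<N. pw A N 0 i i) = real N" by simp
      ultimately show ?thesis using word[of 0] by simp
    qed
    then have "C * ipf N D D > 0" using N by linarith
    then have Dpos: "ipf N D D > 0" using C by (simp add: zero_less_mult_iff)
    have exW: "\<exists>x\<in>W. ipf N x x = 1"
    proof
      define s where "s = 1 / sqrt (ipf N D D)"
      show "(\<lambda>i. s * D i) \<in> W" using Wsub DW unfolding subsp_def by auto
      show "ipf N (\<lambda>i. s * D i) (\<lambda>i. s * D i) = 1" unfolding ipf_scale2 s_def using Dpos
        by (simp add: power_divide)
    qed
    obtain w where w: "w \<in> W" "ipf N w w = 1" "mvf N (sq2 N A) w = (\<lambda>i. rqf N (sq2 N A) w * w i)"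
      and allW: "\<forall>x\<in>W. rqf N (sq2 N A) x \<le> rqf N (sq2 N A) w * ipf N x x"
      using variational[OF sq2_symm[OF sy] Wcl WZ Wsub Winv2 exW] by blast
    define m2 where "m2 = rqf N (sq2 N A) w"
    have rq2: "rqf N (sq2 N A) x = ipf N (mvf N A x) (mvf N A x)" for x
      unfolding rqf_def mvf_sq2 using mvf_adj[OF sy] by simp
    have m20: "m2 \<ge> 0" unfolding m2_def rq2 by (rule ipf_nonneg)
    have wZ: "w \<in> ZZ N" using w WZ by auto
    have mwW: "mvf N A w \<in> W" using Winv w by auto
    have m2lt: "m2 < l^2"
    proof (rule ccontr)
      assume "\<not> m2 < l^2"
      then have ge: "m2 \<ge> l^2" by simp
      show False
      proof (cases "m2 = 0")
        case True
        then have "l * l \<le> 0" using ge by (simp add: power2_eq_square)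
        then have "l * l = 0" using zero_le_square[of l] by linarith
        then have "l = 0" by simp
        have "ipf N (mvf N A w) (mvf N A w) = 0" using True unfolding m2_def rq2 .
        then have "mvf N A w = (\<lambda>_. 0)" using ipf_zero_ZZ mvf_ZZ by blast
        then have "w \<in> G" unfolding G_def using wZ \<open>l = 0\<close> by simp
        then have "ipf N w w = 0" using w(1) unfolding W_def by auto
        then show False using w(2) by simp
      next
        case False
        then have m2p: "m2 > 0" using m20 by simp
        define s where "s = sqrt m2"
        have s: "s > 0" "s * s = m2" unfolding s_def using m2p by auto
        have sl: "s \<ge> l"
        proof (rule ccontr)
          assume "\<not> s \<ge> l" then have "s < l" by simp
          then have "s * s < l * l" using s(1) by (simp add: mult_strict_mono)
          then show False using ge s(2) by (simp add: power2_eq_square)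
        qed
        define u where "u = (\<lambda>i. mvf N A w i + s * w i)"
        have uW: "u \<in> W" using Wsub mwW w(1) unfolding subsp_def u_def by auto
        have uZ: "u \<in> ZZ N" using uW WZ by auto
        have mu: "mvf N A u = (\<lambda>i. s * u i)"
        proof -
          have "mvf N A u = (\<lambda>i. mvf N A (mvf N A w) i + s * mvf N A w i)" unfolding u_def mvf_add ..
          also have "mvf N A (mvf N A w) = (\<lambda>i. m2 * w i)" using w(3) unfolding m2_def mvf_sq2 .
          finally show ?thesis unfolding u_def using s(2) by (auto simp: algebra_simps)
        qed
        show False
        proof (cases "ipf N u u = 0")
          case False
          have "s \<le> l" using maxl[OF uZ False mu] .
          then have "s = l" using sl by simp
          then have "u \<in> G" unfolding G_def using uZ mu by simp
          then have "ipf N u u = 0" using uW unfolding W_def by auto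
          then show False using False by simp
        next
          case True
          then have "u = (\<lambda>_. 0)" using ipf_zero_ZZ uZ by blast
          then have "mvf N A w = (\<lambda>i. (- s) * w i)"
          proof -
            assume u0: "u = (\<lambda>_. 0)"
            show ?thesis
            proof
              fix i
              have "mvf N A w i + s * w i = 0" using fun_cong[OF u0, of i] unfolding u_def by simp
              then show "mvf N A w i = (- s) * w i" by simp
            qed
          qed
          then have "rqf N A w = - s * ipf N w w" by (rule rqf_eig)
          then have "rqf N A w < 0" using w(2) s(1) by simp
          then show False using psd[of w] by simp
        qed
      qed
    qed
    have lpos: "l > 0" using m2lt m20 l0 by (cases "l = 0") auto
    let ?it = "\<lambda>k. (mvf N A ^^ k) D"
    have itW: "?it k \<in> W" for k
    proof (induction k)
      case 0 show ?case using DW by simp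
    next
      case (Suc k) then show ?case using Winv by simp
    qed
    have itb: "ipf N (?it k) (?it k) \<le> m2 ^ k * ipf N D D" for k
    proof (induction k)
      case 0 then show ?case by simp
    next
      case (Suc k)
      have "ipf N (?it (Suc k)) (?it (Suc k)) = rqf N (sq2 N A) (?it k)" by (simp add: rq2)
      also have "\<dots> \<le> m2 * ipf N (?it k) (?it k)" using allW itW unfolding m2_def by blast
      also have "\<dots> \<le> m2 * (m2 ^ k * ipf N D D)" using Suc m20 by (rule mult_left_mono)
      finally show ?case by simp
    qed
    have ineq: "l ^ (2 * k) \<le> C * (m2 ^ k * ipf N D D)" for k
    proof -
      have "l ^ (2 * k) \<le> (\<Sum>i<N. pw A N (k + k) i i)"
        using trace_bound[OF sy w0(1,2) w0(3)[folded l_def]] .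
      also have "\<dots> \<le> C * (\<Sum>i<N. \<Sum>j<N. D i * pw A N (k + k) i j * D j)" by (rule word)
      also have "(\<Sum>i<N. \<Sum>j<N. D i * pw A N (k + k) i j * D j) = ipf N D (?it (k + k))"
        unfolding ipf_def
      proof (intro sum.cong refl)
        fix i assume i: "i \<in> {..<N}"
        have "(\<Sum>j<N. pw A N (k+k) i j * D j) = ?it (k+k) i" using pw_mvf[OF _ DZ] i by auto
        then show "(\<Sum>j<N. D i * pw A N (k+k) i j * D j) = D i * ?it (k+k) i"
          by (simp add: sum_distrib_left[symmetric] mult.assoc)
      qed
      also have "\<dots> = ipf N (?it k) (?it k)" using adj_pow[OF sy, of N k D k D] by simp
      also have "C * \<dots> \<le> C * (m2 ^ k * ipf N D D)" using itb C by simp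
      finally show ?thesis .
    qed
    define r where "r = m2 / l^2"
    have r: "r < 1" "r \<ge> 0" unfolding r_def using m2lt lpos m20 by auto
    obtain k where k: "r ^ k < 1 / (C * ipf N D D)"
      using real_arch_pow_inv[OF _ r(1), of "1 / (C * ipf N D D)"] C Dpos by auto
    have "l ^ (2 * k) \<le> C * (m2 ^ k * ipf N D D)" by (rule ineq)
    also have "m2 ^ k = r ^ k * l ^ (2 * k)" unfolding r_def using lpos
      by (simp add: power_divide power_mult)
    finally have A1: "l ^ (2 * k) \<le> (r ^ k * (C * ipf N D D)) * l ^ (2 * k)" by (simp add: ac_simps)
    have A2: "r ^ k * (C * ipf N D D) < 1" using k C Dpos by (simp add: field_simps)
    have A3: "l ^ (2 * k) > 0" using lpos by simp
    have "(r ^ k * (C * ipf N D D)) * l ^ (2 * k) < 1 * l ^ (2 * k)"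
      using A2 A3 by (rule mult_strict_right_mono)
    then show False using A1 by linarith
  qed
  show ?thesis
    using w0 maxl part3 unfolding l_def by (intro exI[of _ "rqf N A w0"]) auto
qed


lemma relp_sym: "relp n L p x z \<longleftrightarrow> relp n L p z x"
  unfolding relp_def by auto

lemma relp_trans: "relp n L p x z \<Longrightarrow> relp n L p z y \<Longrightarrow> relp n L p x y"
  unfolding relp_def by auto

lemma ee_sym: "ee n L p x z = ee n L p z x"
  unfolding ee_def using relp_sym by (auto simp: mult.commute)

lemma Af_symm: "symm (Af n L)"
  unfolding symm_def Af_def using ee_sym by simp

lemma card_relp:
  assumes p: "p + 1 < 2 * L" and x: "relp n L p x x"
  shows "card {z. z < (n+1)^(2*L) \<and> relp n L p x z} = n + 1"
proof -
  let ?Z = "{z. z < (n+1)^(2*L) \<and> relp n L p x z}"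
  have "bij_betw (\<lambda>z. digit n p z) ?Z {..n}"
  proof (rule bij_betwI')
    fix z1 z2 assume z1: "z1 \<in> ?Z" and z2: "z2 \<in> ?Z"
    show "(digit n p z1 = digit n p z2) = (z1 = z2)"
    proof
      assume e: "digit n p z1 = digit n p z2"
      have "\<forall>q<2*L. digit n q z1 = digit n q z2"
      proof (intro allI impI)
        fix q assume q: "q < 2 * L"
        show "digit n q z1 = digit n q z2"
        proof (cases "q = p \<or> q = p + 1")
          case True then show ?thesis using e z1 z2 unfolding relp_def by auto
        next
          case False then show ?thesis using z1 z2 q unfolding relp_def by auto
        qed
      qed
      then show "z1 = z2" using digit_inj z1 z2 by blast
    qed simp
  next
    fix z assume "z \<in> ?Z" then show "digit n p z \<in> {..n}" using digit_le by auto
  next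
    fix a assume a: "a \<in> {..n}"
    have fle: "\<forall>q<2*L. (if q = p then a else if q = p + 1 then n - a else digit n q x) \<le> n"
      using a digit_le by auto
    obtain z where z: "z < (n+1)^(2*L)"
      "\<forall>q<2*L. digit n q z = (if q = p then a else if q = p + 1 then n - a else digit n q x)"
      using digit_surj[OF fle] by blast
    have "relp n L p x z" using x z p unfolding relp_def by auto
    moreover have "digit n p z = a" using z p by auto
    ultimately show "\<exists>z\<in>?Z. a = digit n p z" using z by auto
  qed
  then show ?thesis by (simp add: bij_betw_same_card)
qed

lemma ee_idem:
  assumes p: "p + 1 < 2 * L" and x: "x < (n+1)^(2*L)" and y: "y < (n+1)^(2*L)"
  shows "(\<Sum>z<(n+1)^(2*L). ee n L p x z * ee n L p z y) = real (n + 1) * ee n L p x y"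
proof -
  have "(\<Sum>z<(n+1)^(2*L). ee n L p x z * ee n L p z y)
      = (\<Sum>z<(n+1)^(2*L). if relp n L p x z \<and> relp n L p z y then sg n L x * sg n L y else 0)"
    unfolding ee_def by (intro sum.cong refl) (auto simp: ac_simps sg_sq)
  also have "\<dots> = (\<Sum>z\<in>{z. z < (n+1)^(2*L) \<and> relp n L p x z \<and> relp n L p z y}. sg n L x * sg n L y)"
    by (simp add: sum.If_cases lessThan_def Collect_conj_eq Int_commute Int_left_commute Int_assoc)
  also have "\<dots> = real (n + 1) * ee n L p x y"
  proof (cases "relp n L p x y")
    case True
    have "{z. z < (n+1)^(2*L) \<and> relp n L p x z \<and> relp n L p z y} = {z. z < (n+1)^(2*L) \<and> relp n L p x z}"
      using True relp_sym relp_trans by blast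
    moreover have "relp n L p x x" using True relp_sym relp_trans by blast
    ultimately show ?thesis using card_relp[OF p] True unfolding ee_def by simp
  next
    case False
    have "{z. z < (n+1)^(2*L) \<and> relp n L p x z \<and> relp n L p z y} = {}" using False relp_trans by blast
    then show ?thesis using False unfolding ee_def by simp
  qed
  finally show ?thesis .
qed

lemma ee_psd:
  assumes p: "p + 1 < 2 * L"
  shows "rqf ((n+1)^(2*L)) (ee n L p) x \<ge> 0"
proof -
  let ?N = "(n+1)^(2*L)"
  let ?E = "ee n L p"
  have sy: "symm ?E" unfolding symm_def using ee_sym by simp
  have mm: "mvf ?N ?E (mvf ?N ?E x) = (\<lambda>i. real (n + 1) * mvf ?N ?E x i)"
  proof
    fix i
    show "mvf ?N ?E (mvf ?N ?E x) i = real (n + 1) * mvf ?N ?E x i"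
    proof (cases "i < ?N")
      case True
      have "mvf ?N ?E (mvf ?N ?E x) i = mvf ?N (sq2 ?N ?E) x i" by (simp add: mvf_sq2)
      also have "\<dots> = (\<Sum>j<?N. real (n + 1) * ?E i j * x j)"
        using True unfolding mvf_def sq2_def by (auto simp: ee_idem[OF p] ee_idem[OF p, simplified] intro!: sum.cong)
      also have "\<dots> = real (n + 1) * mvf ?N ?E x i" using True unfolding mvf_def
        by (simp add: sum_distrib_left mult.assoc)
      finally show ?thesis .
    qed (simp add: mvf_def)
  qed
  have "ipf ?N (mvf ?N ?E x) (mvf ?N ?E x) = ipf ?N x (mvf ?N ?E (mvf ?N ?E x))"
    using mvf_adj[OF sy] by simp
  also have "\<dots> = real (n + 1) * rqf ?N ?E x" unfolding mm rqf_def by (simp add: ipf_scale_right)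
  finally have "real (n + 1) * rqf ?N ?E x \<ge> 0" using ipf_nonneg by metis
  then show ?thesis by (simp add: zero_le_mult_iff)
qed

lemma Af_psd: "rqf ((n+1)^(2*L)) (Af n L) x \<ge> 0"
proof -
  let ?N = "(n+1)^(2*L)"
  let ?P = "{p. p + 1 < 2 * L}"
  have "rqf ?N (Af n L) x = (\<Sum>i<?N. \<Sum>j<?N. \<Sum>p\<in>?P. x i * ee n L p i j * x j)"
    unfolding rqf_alt Af_def by (simp only: sum_distrib_left sum_distrib_right)
  also have "\<dots> = (\<Sum>i<?N. \<Sum>p\<in>?P. \<Sum>j<?N. x i * ee n L p i j * x j)"
    by (rule sum.cong[OF refl], rule sum.swap)
  also have "\<dots> = (\<Sum>p\<in>?P. \<Sum>i<?N. \<Sum>j<?N. x i * ee n L p i j * x j)" by (rule sum.swap)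
  also have "\<dots> = (\<Sum>p | p + 1 < 2 * L. rqf ?N (ee n L p) x)" unfolding rqf_alt ..
  also have "\<dots> \<ge> 0" by (rule sum_nonneg) (use ee_psd in blast)
  finally show ?thesis .
qed


definition "Dz n L = (\<lambda>i. if i < hdim n L then Dv n L i else 0)"

lemma Hv: "i < hdim n L \<Longrightarrow> (H_AF n L *\<^sub>v vec (hdim n L) f) $ i = - mvf (hdim n L) (Af n L) f i"
proof -
  assume i: "i < hdim n L"
  have dr: "dim_row (H_AF n L) = hdim n L" "dim_col (H_AF n L) = hdim n L" using dims(1)[of n L] by auto
  have "(H_AF n L *\<^sub>v vec (hdim n L) f) $ i = (\<Sum>j<hdim n L. H_AF n L $$ (i, j) * f j)"
    using i dr by (simp add: scalar_prod_def atLeast0LessThan)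
  also have "\<dots> = (\<Sum>j<hdim n L. - (Af n L i j * f j))"
    using i by (intro sum.cong refl) (simp add: H_AF_entry)
  also have "\<dots> = - mvf (hdim n L) (Af n L) f i" using i unfolding mvf_def by (simp add: sum_negf)
  finally show ?thesis .
qed

lemma eigvec_of:
  assumes w: "w \<in> ZZ (hdim n L)" "ipf (hdim n L) w w \<noteq> 0" "mvf (hdim n L) (Af n L) w = (\<lambda>i. l * w i)"
  shows "eigenvector (H_AF n L) (vec (hdim n L) w) (- l)"
  unfolding eigenvector_def
proof (intro conjI)
  let ?N = "hdim n L"
  have dr: "dim_row (H_AF n L) = ?N" using dims(1) by auto
  show "vec ?N w \<in> carrier_vec (dim_row (H_AF n L))" using dr by simp
  show "vec ?N w \<noteq> 0\<^sub>v (dim_row (H_AF n L))"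
  proof
    assume "vec ?N w = 0\<^sub>v (dim_row (H_AF n L))"
    then have "\<forall>i<?N. w i = 0"
    proof (intro allI impI)
      fix i assume e: "vec ?N w = 0\<^sub>v (dim_row (H_AF n L))" and i: "i < ?N"
      have "vec ?N w $ i = 0\<^sub>v (dim_row (H_AF n L)) $ i" using e by simp
      then show "w i = 0" using i dr by simp
    qed
    then have "ipf ?N w w = 0" unfolding ipf_def by simp
    then show False using w(2) by simp
  qed
  show "H_AF n L *\<^sub>v vec ?N w = (- l) \<cdot>\<^sub>v vec ?N w"
  proof (rule eq_vecI)
    show "dim_vec (H_AF n L *\<^sub>v vec ?N w) = dim_vec ((- l) \<cdot>\<^sub>v vec ?N w)" using dr by simp
    fix i assume "i < dim_vec ((- l) \<cdot>\<^sub>v vec ?N w)"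
    then have i: "i < ?N" by simp
    have "(H_AF n L *\<^sub>v vec ?N w) $ i = - mvf ?N (Af n L) w i" by (rule Hv[OF i])
    also have "\<dots> = (- l) * w i" unfolding w(3) by simp
    finally show "(H_AF n L *\<^sub>v vec ?N w) $ i = ((- l) \<cdot>\<^sub>v vec ?N w) $ i" using i by simp
  qed
qed

theorem part2:
  assumes "n \<ge> 1"
  shows "\<exists>E0. eigenvalue (H_AF n L) E0 \<and> (\<forall>k. eigenvalue (H_AF n L) k \<longrightarrow> E0 \<le> k)
          \<and> (\<exists>v. eigenvector (H_AF n L) v E0 \<and> v \<bullet> D_vec n L \<noteq> 0)"
proof -
  let ?N = "hdim n L"
  have NN: "?N = (n+1)^(2*L)" by (rule hdim_eq)
  have DZ: "Dz n L \<in> ZZ ?N" unfolding Dz_def ZZ_def by auto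
  have Npos: "?N > 0" unfolding hdim_def by simp
  have word: "real ((n+1)^L) * (\<Sum>i<?N. \<Sum>j<?N. Dz n L i * pw (Af n L) ?N k i j * Dz n L j)
      \<ge> (\<Sum>i<?N. pw (Af n L) ?N k i i)" for k
  proof -
    have "(\<Sum>i<?N. \<Sum>j<?N. Dz n L i * pw (Af n L) ?N k i j * Dz n L j)
        = (\<Sum>i<?N. \<Sum>j<?N. Dv n L i * pw (Af n L) ?N k i j * Dv n L j)"
      unfolding Dz_def by (intro sum.cong refl) auto
    then show ?thesis using key_fun[of n L k] unfolding NN by simp
  qed
  have psd: "rqf ?N (Af n L) x \<ge> 0" for x unfolding NN by (rule Af_psd)
  obtain l where
    ex1: "\<exists>w\<in>ZZ ?N. ipf ?N w w \<noteq> 0 \<and> mvf ?N (Af n L) w = (\<lambda>i. l * w i)"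
    and mx: "\<forall>m v. v \<in> ZZ ?N \<longrightarrow> ipf ?N v v \<noteq> 0 \<longrightarrow> mvf ?N (Af n L) v = (\<lambda>i. m * v i) \<longrightarrow> m \<le> l"
    and ex3: "\<exists>v\<in>ZZ ?N. ipf ?N v v \<noteq> 0 \<and> mvf ?N (Af n L) v = (\<lambda>i. l * v i) \<and> ipf ?N v (Dz n L) \<noteq> 0"
  proof -
    have C: "real ((n+1)^L) > 0" by simp
    show ?thesis using spectral_main[OF Af_symm psd DZ C Npos word] that by blast
  qed
  show ?thesis
  proof (intro exI[of _ "- l"] conjI allI impI)
    obtain w where w: "w \<in> ZZ ?N" "ipf ?N w w \<noteq> 0" "mvf ?N (Af n L) w = (\<lambda>i. l * w i)" using ex1 by blast
    show "eigenvalue (H_AF n L) (- l)" unfolding eigenvalue_def using eigvec_of[OF w] by blast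
  next
    fix k assume "eigenvalue (H_AF n L) k"
    then obtain v where v: "eigenvector (H_AF n L) v k" unfolding eigenvalue_def by blast
    have dr: "dim_row (H_AF n L) = ?N" using dims(1) by auto
    have vc: "v \<in> carrier_vec ?N" "v \<noteq> 0\<^sub>v ?N" "H_AF n L *\<^sub>v v = k \<cdot>\<^sub>v v"
      using v dr unfolding eigenvector_def by auto
    define f where "f = (\<lambda>j. if j < ?N then v $ j else 0)"
    have fZ: "f \<in> ZZ ?N" unfolding f_def ZZ_def by auto
    have vf: "v = vec ?N f" using vc(1) unfolding f_def by (auto intro!: eq_vecI)
    have fne: "ipf ?N f f \<noteq> 0"
    proof
      assume "ipf ?N f f = 0"
      then have "\<forall>i<?N. f i = 0" using ipf_zero by blast
      then have "v = 0\<^sub>v ?N" using vc(1) unfolding f_def by (auto intro!: eq_vecI)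
      then show False using vc(2) by simp
    qed
    have "mvf ?N (Af n L) f = (\<lambda>i. (- k) * f i)"
    proof
      fix i show "mvf ?N (Af n L) f i = (- k) * f i"
      proof (cases "i < ?N")
        case True
        have e1: "(H_AF n L *\<^sub>v v) $ i = k * v $ i" using vc True by simp
        have e2: "(H_AF n L *\<^sub>v v) $ i = - mvf ?N (Af n L) f i" using Hv[OF True, of f] vf by simp
        have e3: "f i = v $ i" using True unfolding f_def by simp
        show ?thesis using e1 e2 e3 by simp
      qed (simp add: mvf_def f_def)
    qed
    then have "- k \<le> l" using mx fZ fne by (intro mx[rule_format, OF fZ fne])
    then show "- l \<le> k" by simp
  next
    obtain v where v: "v \<in> ZZ ?N" "ipf ?N v v \<noteq> 0" "mvf ?N (Af n L) v = (\<lambda>i. l * v i)"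
      "ipf ?N v (Dz n L) \<noteq> 0" using ex3 by blast
    have ev: "eigenvector (H_AF n L) (vec ?N v) (- l)" by (rule eigvec_of[OF v(1-3)])
    have "vec ?N v \<bullet> D_vec n L = ipf ?N v (Dz n L)"
      unfolding scalar_prod_def ipf_def Dz_def using dims(2)
      by (auto simp: atLeast0LessThan D_vec_entry intro!: sum.cong)
    then have "vec ?N v \<bullet> D_vec n L \<noteq> 0" using v(4) by simp
    then show "\<exists>v. eigenvector (H_AF n L) v (- l) \<and> v \<bullet> D_vec n L \<noteq> 0" using ev by blast
  qed
qed

theorem mainTheorem15:
  fixes n L :: nat and \<beta> :: real
  assumes "n \<ge> 1" and "\<beta> > 0"
  shows "(D_vec n L \<bullet> (mat_exp ((- \<beta>) \<cdot>\<^sub>m H_AF n L) *\<^sub>v D_vec n L))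
           / mat_trace (mat_exp ((- \<beta>) \<cdot>\<^sub>m H_AF n L))
         \<ge> 1 / real (n + 1) ^ L
     \<and> (\<exists>E0. eigenvalue (H_AF n L) E0 \<and> (\<forall>k. eigenvalue (H_AF n L) k \<longrightarrow> E0 \<le> k)
          \<and> (\<exists>v. eigenvector (H_AF n L) v E0 \<and> v \<bullet> D_vec n L \<noteq> 0))"
  using part1[OF assms(2), of n L] part2[OF assms(1), of L] unfolding Ab_def by auto


end
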